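(* Let $\mathcal C$ and $\mathcal D$ be sites whose topologies are generated by cd-structures $P_{\mathcal C}$ and $P_{\mathcal D}$ respectively, and let $u:\mathcal C\to\mathcal D$ be a functor. (a) Assume that $P_{\mathcal C}$ is complete and that $u$ preserves the fibre products involved in base changes along morphisms belonging to covering families of $\mathcal C$. Then $u$ is continuous if and only if, for every distinguished square $Q\in P_{\mathcal C}$, the family $\{u(Q(01))\to u(Q(11)),u(Q(10))\to u(Q(11))\}$ is a cover in $\mathcal D$. (b) Assume that (1) $P_{\mathcal D}$ is complete, and (2) for any $X'\in\mathcal C$ and any distinguished square $Q\in P_{\mathcal D}$ with $Q(11)=u(X')$, there exists $Q'\in P_{\mathcal C}$ with $u(Q')=Q$ and $Q'(11)=X'$. Then $u$ is cocontinuous.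
   Context: A cd-structure on a category is a class $P$ of commutative squares $Q$ with vertices $Q(00)\to Q(01)\to Q(11)$, $Q(00)\to Q(10)\to Q(11)$ (distinguished squares); the topology generated by $P$ is the Grothendieck topology generated by the elementary covers $\{Q(01)\to Q(11),Q(10)\to Q(11)\}$, $Q\in P$. Simple covers are defined inductively: a family consisting of a single isomorphism is simple, and if $Q\in P$ and $\{Y_s\to Q(01)\}$, $\{A_t\to Q(10)\}$ are simple covers then $\{Y_s\to Q(01)\to Q(11),A_t\to Q(10)\to Q(11)\}$ is simple. $P$ is complete if every covering sieve of the generated topology contains the sieve generated by a simple cover. A functor $u:\mathcal C\to\mathcal D$ of sites is continuous if $u^*:\widehat{\mathcal D}\to\widehat{\mathcal C}$ (precomposition on presheaves of sets) sends sheaves to sheaves, and cocontinuous if the right adjoint $u_*$ of $u^*$ sends sheaves to sheaves; equivalently, $u$ is cocontinuous iff for every $X\in\mathcal C$ and every cover $\{V_i\to u(X)\}$ in $\mathcal D$ there is a cover $\{U_j\to X\}$ in $\mathcal C$ such that each $u(U_j)\to u(X)$ factors through some $V_i$. Sites are assumed to be $U$-sites in the sense of SGA4. *)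

theory Defs
  imports Main
begin

text \<open>A category: objects, arrows, domain, codomain, identities and composition
  (Comp g f is the composite g after f, defined when Cod f = Dom g).\<close>
record ('o,'m) cat =
  Obj  :: "'o set"
  Arr  :: "'m set"
  Dom  :: "'m \<Rightarrow> 'o"
  Cod  :: "'m \<Rightarrow> 'o"
  Idm  :: "'o \<Rightarrow> 'm"
  Comp :: "'m \<Rightarrow> 'm \<Rightarrow> 'm"

definition is_cat :: "('o,'m) cat \<Rightarrow> bool" where
  "is_cat C \<longleftrightarrow>
     (\<forall>f\<in>Arr C. Dom C f \<in> Obj C \<and> Cod C f \<in> Obj C) \<and>
     (\<forall>X\<in>Obj C. Idm C X \<in> Arr C \<and> Dom C (Idm C X) = X \<and> Cod C (Idm C X) = X) \<and>
     (\<forall>f\<in>Arr C. \<forall>g\<in>Arr C. Cod C f = Dom C g \<longrightarrow>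
        Comp C g f \<in> Arr C \<and> Dom C (Comp C g f) = Dom C f \<and> Cod C (Comp C g f) = Cod C g) \<and>
     (\<forall>f\<in>Arr C. \<forall>g\<in>Arr C. \<forall>h\<in>Arr C. Cod C f = Dom C g \<and> Cod C g = Dom C h \<longrightarrow>
        Comp C h (Comp C g f) = Comp C (Comp C h g) f) \<and>
     (\<forall>f\<in>Arr C. Comp C f (Idm C (Dom C f)) = f \<and> Comp C (Idm C (Cod C f)) f = f)"

definition is_iso :: "('o,'m) cat \<Rightarrow> 'm \<Rightarrow> bool" where
  "is_iso C f \<longleftrightarrow> f \<in> Arr C \<and> (\<exists>g\<in>Arr C. Dom C g = Cod C f \<and> Cod C g = Dom C f \<and>
      Comp C g f = Idm C (Dom C f) \<and> Comp C f g = Idm C (Cod C f))"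

definition is_functor :: "('o,'m) cat \<Rightarrow> ('p,'n) cat \<Rightarrow> ('o \<Rightarrow> 'p) \<Rightarrow> ('m \<Rightarrow> 'n) \<Rightarrow> bool" where
  "is_functor C D uo um \<longleftrightarrow>
     (\<forall>X\<in>Obj C. uo X \<in> Obj D \<and> um (Idm C X) = Idm D (uo X)) \<and>
     (\<forall>f\<in>Arr C. um f \<in> Arr D \<and> Dom D (um f) = uo (Dom C f) \<and> Cod D (um f) = uo (Cod C f)) \<and>
     (\<forall>f\<in>Arr C. \<forall>g\<in>Arr C. Cod C f = Dom C g \<longrightarrow> um (Comp C g f) = Comp D (um g) (um f))"

definition is_pullback :: "('o,'m) cat \<Rightarrow> 'm \<Rightarrow> 'm \<Rightarrow> 'm \<Rightarrow> 'm \<Rightarrow> bool" where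
  "is_pullback C p1 p2 f g \<longleftrightarrow>
     p1 \<in> Arr C \<and> p2 \<in> Arr C \<and> f \<in> Arr C \<and> g \<in> Arr C \<and>
     Cod C p1 = Dom C f \<and> Cod C p2 = Dom C g \<and> Dom C p1 = Dom C p2 \<and> Cod C f = Cod C g \<and>
     Comp C f p1 = Comp C g p2 \<and>
     (\<forall>q1\<in>Arr C. \<forall>q2\<in>Arr C. Cod C q1 = Dom C f \<and> Cod C q2 = Dom C g \<and> Dom C q1 = Dom C q2 \<and>
        Comp C f q1 = Comp C g q2 \<longrightarrow>
        (\<exists>!h. h \<in> Arr C \<and> Dom C h = Dom C q1 \<and> Cod C h = Dom C p1 \<and>
               Comp C p1 h = q1 \<and> Comp C p2 h = q2))"

definition is_sieve :: "('o,'m) cat \<Rightarrow> 'o \<Rightarrow> 'm set \<Rightarrow> bool" where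
  "is_sieve C X S \<longleftrightarrow> S \<subseteq> Arr C \<and> (\<forall>f\<in>S. Cod C f = X) \<and>
     (\<forall>f\<in>S. \<forall>g\<in>Arr C. Cod C g = Dom C f \<longrightarrow> Comp C f g \<in> S)"

definition max_sieve :: "('o,'m) cat \<Rightarrow> 'o \<Rightarrow> 'm set" where
  "max_sieve C X = {f \<in> Arr C. Cod C f = X}"

definition pb_sieve :: "('o,'m) cat \<Rightarrow> 'm \<Rightarrow> 'm set \<Rightarrow> 'm set" where
  "pb_sieve C f S = {g \<in> Arr C. Cod C g = Dom C f \<and> Comp C f g \<in> S}"

definition sieve_gen :: "('o,'m) cat \<Rightarrow> 'm set \<Rightarrow> 'm set" where
  "sieve_gen C R = {Comp C f g | f g. f \<in> R \<and> g \<in> Arr C \<and> Cod C g = Dom C f}"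

definition is_topology :: "('o,'m) cat \<Rightarrow> ('o \<Rightarrow> 'm set set) \<Rightarrow> bool" where
  "is_topology C J \<longleftrightarrow>
     (\<forall>X. \<forall>S\<in>J X. X \<in> Obj C \<and> is_sieve C X S) \<and>
     (\<forall>X\<in>Obj C. max_sieve C X \<in> J X) \<and>
     (\<forall>X S f. S \<in> J X \<and> f \<in> Arr C \<and> Cod C f = X \<longrightarrow> pb_sieve C f S \<in> J (Dom C f)) \<and>
     (\<forall>X S R. S \<in> J X \<and> is_sieve C X R \<and> (\<forall>f\<in>S. pb_sieve C f R \<in> J (Dom C f)) \<longrightarrow> R \<in> J X)"

definition gen_topology :: "('o,'m) cat \<Rightarrow> ('o \<Rightarrow> 'm set set) \<Rightarrow> 'o \<Rightarrow> 'm set set" where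
  "gen_topology C E X = {S. \<forall>J. is_topology C J \<and> (\<forall>Y. \<forall>R\<in>E Y. sieve_gen C R \<in> J Y) \<longrightarrow> S \<in> J X}"

definition covering_family :: "('o,'m) cat \<Rightarrow> ('o \<Rightarrow> 'm set set) \<Rightarrow> 'o \<Rightarrow> 'm set \<Rightarrow> bool" where
  "covering_family C J X R \<longleftrightarrow> R \<subseteq> Arr C \<and> (\<forall>f\<in>R. Cod C f = X) \<and> sieve_gen C R \<in> J X"

text \<open>A square Q = (a,b,c,d) with a : Q00 \<rightarrow> Q01, b : Q01 \<rightarrow> Q11,
  c : Q00 \<rightarrow> Q10, d : Q10 \<rightarrow> Q11, commuting: b \<circ> a = d \<circ> c.\<close>
type_synonym 'm square = "'m \<times> 'm \<times> 'm \<times> 'm"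

fun sq_a :: "'m square \<Rightarrow> 'm" where "sq_a (a,b,c,d) = a"
fun sq_b :: "'m square \<Rightarrow> 'm" where "sq_b (a,b,c,d) = b"
fun sq_c :: "'m square \<Rightarrow> 'm" where "sq_c (a,b,c,d) = c"
fun sq_d :: "'m square \<Rightarrow> 'm" where "sq_d (a,b,c,d) = d"

definition sq11 :: "('o,'m) cat \<Rightarrow> 'm square \<Rightarrow> 'o" where "sq11 C Q = Cod C (sq_b Q)"
definition sq01 :: "('o,'m) cat \<Rightarrow> 'm square \<Rightarrow> 'o" where "sq01 C Q = Dom C (sq_b Q)"
definition sq10 :: "('o,'m) cat \<Rightarrow> 'm square \<Rightarrow> 'o" where "sq10 C Q = Dom C (sq_d Q)"

fun map_sq :: "('m \<Rightarrow> 'n) \<Rightarrow> 'm square \<Rightarrow> 'n square" where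
  "map_sq u (a,b,c,d) = (u a, u b, u c, u d)"

definition is_square :: "('o,'m) cat \<Rightarrow> 'm square \<Rightarrow> bool" where
  "is_square C Q \<longleftrightarrow> sq_a Q \<in> Arr C \<and> sq_b Q \<in> Arr C \<and> sq_c Q \<in> Arr C \<and> sq_d Q \<in> Arr C \<and>
     Cod C (sq_a Q) = Dom C (sq_b Q) \<and> Cod C (sq_c Q) = Dom C (sq_d Q) \<and>
     Dom C (sq_a Q) = Dom C (sq_c Q) \<and> Cod C (sq_b Q) = Cod C (sq_d Q) \<and>
     Comp C (sq_b Q) (sq_a Q) = Comp C (sq_d Q) (sq_c Q)"

definition cd_structure :: "('o,'m) cat \<Rightarrow> 'm square set \<Rightarrow> bool" where
  "cd_structure C P \<longleftrightarrow> (\<forall>Q\<in>P. is_square C Q)"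

definition elem_covers :: "('o,'m) cat \<Rightarrow> 'm square set \<Rightarrow> 'o \<Rightarrow> 'm set set" where
  "elem_covers C P X = {{sq_b Q, sq_d Q} | Q. Q \<in> P \<and> sq11 C Q = X}"

definition cd_topology :: "('o,'m) cat \<Rightarrow> 'm square set \<Rightarrow> 'o \<Rightarrow> 'm set set" where
  "cd_topology C P = gen_topology C (elem_covers C P)"

inductive simple_cover :: "('o,'m) cat \<Rightarrow> 'm square set \<Rightarrow> 'o \<Rightarrow> 'm set \<Rightarrow> bool"
  for C P where
  iso: "is_iso C f \<Longrightarrow> simple_cover C P (Cod C f) {f}"
| step: "Q \<in> P \<Longrightarrow> simple_cover C P (sq01 C Q) R1 \<Longrightarrow> simple_cover C P (sq10 C Q) R2 \<Longrightarrow>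
     simple_cover C P (sq11 C Q)
       ((\<lambda>y. Comp C (sq_b Q) y) ` R1 \<union> (\<lambda>t. Comp C (sq_d Q) t) ` R2)"

definition cd_complete :: "('o,'m) cat \<Rightarrow> 'm square set \<Rightarrow> bool" where
  "cd_complete C P \<longleftrightarrow> (\<forall>X S. S \<in> cd_topology C P X \<longrightarrow>
     (\<exists>R. simple_cover C P X R \<and> sieve_gen C R \<subseteq> S))"

text \<open>A presheaf of sets with values in (subsets of) the type 'v:
  F0 X is the set of sections over X, F1 f the restriction map F(Cod f) \<rightarrow> F(Dom f).\<close>
definition is_presheaf :: "('o,'m) cat \<Rightarrow> ('o \<Rightarrow> 'v set) \<Rightarrow> ('m \<Rightarrow> 'v \<Rightarrow> 'v) \<Rightarrow> bool" where
  "is_presheaf C F0 F1 \<longleftrightarrow>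
     (\<forall>f\<in>Arr C. \<forall>x\<in>F0 (Cod C f). F1 f x \<in> F0 (Dom C f)) \<and>
     (\<forall>X\<in>Obj C. \<forall>x\<in>F0 X. F1 (Idm C X) x = x) \<and>
     (\<forall>f\<in>Arr C. \<forall>g\<in>Arr C. Cod C f = Dom C g \<longrightarrow>
        (\<forall>x\<in>F0 (Cod C g). F1 (Comp C g f) x = F1 f (F1 g x)))"

definition is_sheaf :: "('o,'m) cat \<Rightarrow> ('o \<Rightarrow> 'm set set) \<Rightarrow> ('o \<Rightarrow> 'v set) \<Rightarrow> ('m \<Rightarrow> 'v \<Rightarrow> 'v) \<Rightarrow> bool" where
  "is_sheaf C J F0 F1 \<longleftrightarrow> is_presheaf C F0 F1 \<and>
     (\<forall>X S s. S \<in> J X \<and> (\<forall>f\<in>S. s f \<in> F0 (Dom C f)) \<and>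
        (\<forall>f\<in>S. \<forall>g\<in>Arr C. Cod C g = Dom C f \<longrightarrow> s (Comp C f g) = F1 g (s f)) \<longrightarrow>
        (\<exists>!x. x \<in> F0 X \<and> (\<forall>f\<in>S. F1 f x = s f)))"

definition continuous_site :: "'v itself \<Rightarrow> ('o,'m) cat \<Rightarrow> ('o \<Rightarrow> 'm set set) \<Rightarrow>
    ('p,'n) cat \<Rightarrow> ('p \<Rightarrow> 'n set set) \<Rightarrow> ('o \<Rightarrow> 'p) \<Rightarrow> ('m \<Rightarrow> 'n) \<Rightarrow> bool" where
  "continuous_site _ C JC D JD uo um \<longleftrightarrow>
     (\<forall>(G0 :: 'p \<Rightarrow> 'v set) G1. is_sheaf D JD G0 G1 \<longrightarrow> is_sheaf C JC (G0 \<circ> uo) (G1 \<circ> um))"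

text \<open>Cocontinuity, via the characterization given in the paper's context.\<close>
definition cocontinuous_site :: "('o,'m) cat \<Rightarrow> ('o \<Rightarrow> 'm set set) \<Rightarrow>
    ('p,'n) cat \<Rightarrow> ('p \<Rightarrow> 'n set set) \<Rightarrow> ('o \<Rightarrow> 'p) \<Rightarrow> ('m \<Rightarrow> 'n) \<Rightarrow> bool" where
  "cocontinuous_site C JC D JD uo um \<longleftrightarrow>
     (\<forall>X\<in>Obj C. \<forall>R. covering_family D JD (uo X) R \<longrightarrow>
        (\<exists>R'. covering_family C JC X R' \<and>
           (\<forall>g\<in>R'. \<exists>f\<in>R. \<exists>h\<in>Arr D. Cod D h = Dom D f \<and> um g = Comp D f h)))"

definition preserves_cover_pullbacks :: "('o,'m) cat \<Rightarrow> ('o \<Rightarrow> 'm set set) \<Rightarrow>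
    ('p,'n) cat \<Rightarrow> ('m \<Rightarrow> 'n) \<Rightarrow> bool" where
  "preserves_cover_pullbacks C JC D um \<longleftrightarrow>
     (\<forall>X R f g. covering_family C JC X R \<and> f \<in> R \<and> g \<in> Arr C \<and> Cod C g = X \<longrightarrow>
        (\<exists>p1 p2. is_pullback C p1 p2 f g) \<and>
        (\<forall>p1 p2. is_pullback C p1 p2 f g \<longrightarrow> is_pullback D (um p1) (um p2) (um f) (um g)))"

end

theory Submission
  imports Defs
begin

locale category =
  fixes C :: "('o,'m) cat"
  assumes cat: "is_cat C"
begin

lemma dom_obj[simp]: "f \<in> Arr C \<Longrightarrow> Dom C f \<in> Obj C" using cat unfolding is_cat_def by blast
lemma cod_obj[simp]: "f \<in> Arr C \<Longrightarrow> Cod C f \<in> Obj C" using cat unfolding is_cat_def by blast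
lemma id_arr[simp]: "X \<in> Obj C \<Longrightarrow> Idm C X \<in> Arr C" using cat unfolding is_cat_def by blast
lemma id_dom[simp]: "X \<in> Obj C \<Longrightarrow> Dom C (Idm C X) = X" using cat unfolding is_cat_def by blast
lemma id_cod[simp]: "X \<in> Obj C \<Longrightarrow> Cod C (Idm C X) = X" using cat unfolding is_cat_def by blast
lemma comp_arr[simp]: "f \<in> Arr C \<Longrightarrow> g \<in> Arr C \<Longrightarrow> Cod C f = Dom C g \<Longrightarrow> Comp C g f \<in> Arr C"
  using cat unfolding is_cat_def by blast
lemma comp_dom[simp]: "f \<in> Arr C \<Longrightarrow> g \<in> Arr C \<Longrightarrow> Cod C f = Dom C g \<Longrightarrow> Dom C (Comp C g f) = Dom C f"
  using cat unfolding is_cat_def by blast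
lemma comp_cod[simp]: "f \<in> Arr C \<Longrightarrow> g \<in> Arr C \<Longrightarrow> Cod C f = Dom C g \<Longrightarrow> Cod C (Comp C g f) = Cod C g"
  using cat unfolding is_cat_def by blast
lemma assoc: "f \<in> Arr C \<Longrightarrow> g \<in> Arr C \<Longrightarrow> h \<in> Arr C \<Longrightarrow> Cod C f = Dom C g \<Longrightarrow> Cod C g = Dom C h \<Longrightarrow>
   Comp C h (Comp C g f) = Comp C (Comp C h g) f"
  using cat unfolding is_cat_def by blast
lemma id_right[simp]: "f \<in> Arr C \<Longrightarrow> Comp C f (Idm C (Dom C f)) = f" using cat unfolding is_cat_def by blast
lemma id_left[simp]: "f \<in> Arr C \<Longrightarrow> Comp C (Idm C (Cod C f)) f = f" using cat unfolding is_cat_def by blast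

lemma sieve_gen_sieve:
  assumes "R \<subseteq> Arr C" "\<forall>f\<in>R. Cod C f = X"
  shows "is_sieve C X (sieve_gen C R)"
  unfolding is_sieve_def sieve_gen_def
proof (intro conjI ballI impI)
  show "{Comp C f g |f g. f \<in> R \<and> g \<in> Arr C \<and> Cod C g = Dom C f} \<subseteq> Arr C" using assms by auto
next
  fix k assume "k \<in> {Comp C f g |f g. f \<in> R \<and> g \<in> Arr C \<and> Cod C g = Dom C f}"
  then show "Cod C k = X" using assms by auto
next
  fix k g assume k: "k \<in> {Comp C f g |f g. f \<in> R \<and> g \<in> Arr C \<and> Cod C g = Dom C f}" and g: "g \<in> Arr C"
  then obtain f h where fh: "k = Comp C f h" "f \<in> R" "h \<in> Arr C" "Cod C h = Dom C f" by auto
  assume "Cod C g = Dom C k"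
  with fh assms have "Comp C k g = Comp C f (Comp C h g)" "Comp C h g \<in> Arr C" "Cod C (Comp C h g) = Dom C f"
    using assoc[of g h f] g by auto
  then show "Comp C k g \<in> {Comp C f g |f g. f \<in> R \<and> g \<in> Arr C \<and> Cod C g = Dom C f}" using fh by blast
qed

lemma in_sieve_gen: "f \<in> R \<Longrightarrow> g \<in> Arr C \<Longrightarrow> Cod C g = Dom C f \<Longrightarrow> Comp C f g \<in> sieve_gen C R"
  unfolding sieve_gen_def by blast

lemma in_sieve_gen_self: "f \<in> R \<Longrightarrow> f \<in> Arr C \<Longrightarrow> f \<in> sieve_gen C R"
  using in_sieve_gen[of f R "Idm C (Dom C f)"] by simp

lemma sieve_gen_E:
  assumes "k \<in> sieve_gen C R"
  obtains f g where "f \<in> R" "g \<in> Arr C" "Cod C g = Dom C f" "k = Comp C f g"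
  using assms unfolding sieve_gen_def by blast

lemma sieveD:
  assumes "is_sieve C X S" "f \<in> S"
  shows "f \<in> Arr C" "Cod C f = X"
  using assms unfolding is_sieve_def by auto

lemma sieve_comp:
  assumes "is_sieve C X S" "f \<in> S" "g \<in> Arr C" "Cod C g = Dom C f"
  shows "Comp C f g \<in> S"
  using assms unfolding is_sieve_def by auto

lemma max_sieve_sieve: "is_sieve C X (max_sieve C X)"
  unfolding is_sieve_def max_sieve_def by auto

lemma pb_sieve_sieve:
  assumes "is_sieve C X S" "f \<in> Arr C" "Cod C f = X"
  shows "is_sieve C (Dom C f) (pb_sieve C f S)"
  unfolding is_sieve_def pb_sieve_def
proof (intro conjI ballI impI)
  fix h g assume h: "h \<in> {g \<in> Arr C. Cod C g = Dom C f \<and> Comp C f g \<in> S}" and g: "g \<in> Arr C" "Cod C g = Dom C h"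
  then have "Comp C f (Comp C h g) = Comp C (Comp C f h) g" using assoc[of g h f] assms by auto
  moreover have "Comp C (Comp C f h) g \<in> S" using sieve_comp[OF assms(1), of "Comp C f h" g] h g assms by auto
  ultimately show "Comp C h g \<in> {g \<in> Arr C. Cod C g = Dom C f \<and> Comp C f g \<in> S}" using h g by auto
qed auto

lemma pb_sieve_comp:
  assumes "f \<in> Arr C" "g \<in> Arr C" "Cod C g = Dom C f"
  shows "pb_sieve C (Comp C f g) S = pb_sieve C g (pb_sieve C f S)"
  unfolding pb_sieve_def using assms assoc[of _ g f] by auto

lemma pb_sieve_id:
  assumes "is_sieve C X S" "X \<in> Obj C"
  shows "pb_sieve C (Idm C X) S = S"
proof (rule set_eqI)
  fix h
  show "h \<in> pb_sieve C (Idm C X) S \<longleftrightarrow> h \<in> S"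
  proof
    assume "h \<in> pb_sieve C (Idm C X) S"
    then have h: "h \<in> Arr C" "Cod C h = X" "Comp C (Idm C X) h \<in> S" using assms unfolding pb_sieve_def by auto
    then show "h \<in> S" using id_left[of h] by simp
  next
    assume h: "h \<in> S"
    then have "h \<in> Arr C" "Cod C h = X" using sieveD[OF assms(1)] by auto
    then show "h \<in> pb_sieve C (Idm C X) S" using h assms id_left[of h] unfolding pb_sieve_def by simp
  qed
qed

lemma pb_sieve_max:
  assumes "is_sieve C X S" "f \<in> S"
  shows "pb_sieve C f S = max_sieve C (Dom C f)"
proof -
  have "f \<in> Arr C" "Cod C f = X" using sieveD[OF assms] by auto
  then show ?thesis unfolding pb_sieve_def max_sieve_def using sieve_comp[OF assms] by auto
qed

lemma iso_inv:
  assumes "is_iso C f"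
  obtains g where "g \<in> Arr C" "Dom C g = Cod C f" "Cod C g = Dom C f"
      "Comp C g f = Idm C (Dom C f)" "Comp C f g = Idm C (Cod C f)"
  using assms unfolding is_iso_def by blast

lemma iso_sieve_gen:
  assumes "is_iso C f"
  shows "sieve_gen C {f} = max_sieve C (Cod C f)"
proof -
  have f: "f \<in> Arr C" using assms unfolding is_iso_def by auto
  obtain g where g: "g \<in> Arr C" "Dom C g = Cod C f" "Cod C g = Dom C f"
      "Comp C g f = Idm C (Dom C f)" "Comp C f g = Idm C (Cod C f)" using iso_inv[OF assms] by blast
  show ?thesis
  proof
    have sv: "is_sieve C (Cod C f) (sieve_gen C {f})" using sieve_gen_sieve[of "{f}" "Cod C f"] f by auto
    show "sieve_gen C {f} \<subseteq> max_sieve C (Cod C f)"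
    proof
      fix h assume "h \<in> sieve_gen C {f}"
      then show "h \<in> max_sieve C (Cod C f)" using sieveD[OF sv] unfolding max_sieve_def by blast
    qed
  next
    show "max_sieve C (Cod C f) \<subseteq> sieve_gen C {f}"
    proof
      fix h assume "h \<in> max_sieve C (Cod C f)"
      then have h: "h \<in> Arr C" "Cod C h = Cod C f" unfolding max_sieve_def by auto
      have "Comp C f (Comp C g h) = Comp C (Comp C f g) h" using assoc[of h g f] h g f by auto
      also have "\<dots> = h" using g h f id_left[of h] by simp
      finally show "h \<in> sieve_gen C {f}" using in_sieve_gen[of f "{f}" "Comp C g h"] h g f by auto
    qed
  qed
qed

lemma id_iso: "X \<in> Obj C \<Longrightarrow> is_iso C (Idm C X)"
  unfolding is_iso_def using id_left[of "Idm C X"] by (intro conjI bexI[of _ "Idm C X"]) auto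

end

lemma genD: "S \<in> gen_topology C E X \<Longrightarrow> is_topology C J \<Longrightarrow> (\<forall>Y. \<forall>R\<in>E Y. sieve_gen C R \<in> J Y) \<Longrightarrow> S \<in> J X"
  unfolding gen_topology_def by blast

lemma top_obj: "is_topology C J \<Longrightarrow> S \<in> J X \<Longrightarrow> X \<in> Obj C" unfolding is_topology_def by blast
lemma top_sieve: "is_topology C J \<Longrightarrow> S \<in> J X \<Longrightarrow> is_sieve C X S" unfolding is_topology_def by blast
lemma top_max: "is_topology C J \<Longrightarrow> X \<in> Obj C \<Longrightarrow> max_sieve C X \<in> J X" unfolding is_topology_def by blast
lemma top_pb: "is_topology C J \<Longrightarrow> S \<in> J X \<Longrightarrow> f \<in> Arr C \<Longrightarrow> Cod C f = X \<Longrightarrow> pb_sieve C f S \<in> J (Dom C f)"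
  unfolding is_topology_def by blast
lemma top_local: "is_topology C J \<Longrightarrow> S \<in> J X \<Longrightarrow> is_sieve C X R \<Longrightarrow> (\<And>f. f \<in> S \<Longrightarrow> pb_sieve C f R \<in> J (Dom C f)) \<Longrightarrow> R \<in> J X"
  unfolding is_topology_def by blast


lemma (in category) gen_topology_is_topology:
  assumes E: "\<forall>Y. \<forall>R\<in>E Y. Y \<in> Obj C \<and> R \<subseteq> Arr C \<and> (\<forall>f\<in>R. Cod C f = Y)"
  shows "is_topology C (gen_topology C E)"
proof -
  define Jm where "Jm = (\<lambda>X. {S. X \<in> Obj C \<and> is_sieve C X S})"
  have tm: "is_topology C Jm"
    unfolding is_topology_def
  proof (intro conjI)
    show "\<forall>X. \<forall>S\<in>Jm X. X \<in> Obj C \<and> is_sieve C X S" unfolding Jm_def by blast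
    show "\<forall>X\<in>Obj C. max_sieve C X \<in> Jm X" unfolding Jm_def using max_sieve_sieve by blast
    show "\<forall>X S f. S \<in> Jm X \<and> f \<in> Arr C \<and> Cod C f = X \<longrightarrow> pb_sieve C f S \<in> Jm (Dom C f)"
    proof (intro allI impI)
      fix X S f assume a: "S \<in> Jm X \<and> f \<in> Arr C \<and> Cod C f = X"
      then show "pb_sieve C f S \<in> Jm (Dom C f)" unfolding Jm_def using pb_sieve_sieve[of X S f] by auto
    qed
    show "\<forall>X S R. S \<in> Jm X \<and> is_sieve C X R \<and> (\<forall>f\<in>S. pb_sieve C f R \<in> Jm (Dom C f)) \<longrightarrow> R \<in> Jm X"
      unfolding Jm_def by blast
  qed
  have gm: "\<forall>Y. \<forall>R\<in>E Y. sieve_gen C R \<in> Jm Y"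
  proof (intro allI ballI)
    fix Y R assume "R \<in> E Y"
    then have "Y \<in> Obj C" "R \<subseteq> Arr C" "\<forall>f\<in>R. Cod C f = Y" using E by auto
    then show "sieve_gen C R \<in> Jm Y" unfolding Jm_def using sieve_gen_sieve by blast
  qed
  have ax1: "\<forall>X. \<forall>S\<in>gen_topology C E X. X \<in> Obj C \<and> is_sieve C X S"
  proof (intro allI ballI)
    fix X S assume "S \<in> gen_topology C E X"
    then have "S \<in> Jm X" using tm gm genD by metis
    then show "X \<in> Obj C \<and> is_sieve C X S" unfolding Jm_def by blast
  qed
  show ?thesis
    unfolding is_topology_def
  proof (intro conjI)
    show "\<forall>X. \<forall>S\<in>gen_topology C E X. X \<in> Obj C \<and> is_sieve C X S" by (rule ax1)
    show "\<forall>X\<in>Obj C. max_sieve C X \<in> gen_topology C E X"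
    proof (intro ballI)
      fix X assume X: "X \<in> Obj C"
      show "max_sieve C X \<in> gen_topology C E X" unfolding gen_topology_def
      proof (intro CollectI allI impI)
        fix J assume "is_topology C J \<and> (\<forall>Y. \<forall>R\<in>E Y. sieve_gen C R \<in> J Y)"
        then have tj: "is_topology C J" by blast
        show "max_sieve C X \<in> J X" by (rule top_max[OF tj X])
      qed
    qed
    show "\<forall>X S f. S \<in> gen_topology C E X \<and> f \<in> Arr C \<and> Cod C f = X \<longrightarrow>
        pb_sieve C f S \<in> gen_topology C E (Dom C f)"
    proof (intro allI impI)
      fix X S f assume a: "S \<in> gen_topology C E X \<and> f \<in> Arr C \<and> Cod C f = X"
      show "pb_sieve C f S \<in> gen_topology C E (Dom C f)" unfolding gen_topology_def
      proof (intro CollectI allI impI)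
        fix J assume J: "is_topology C J \<and> (\<forall>Y. \<forall>R\<in>E Y. sieve_gen C R \<in> J Y)"
        then have tj: "is_topology C J" and gj: "\<forall>Y. \<forall>R\<in>E Y. sieve_gen C R \<in> J Y" by blast+
        have "S \<in> J X" using a genD[OF _ tj gj] by blast
        then show "pb_sieve C f S \<in> J (Dom C f)" using top_pb[OF tj] a by blast
      qed
    qed
    show "\<forall>X S R. S \<in> gen_topology C E X \<and> is_sieve C X R \<and>
      (\<forall>f\<in>S. pb_sieve C f R \<in> gen_topology C E (Dom C f)) \<longrightarrow> R \<in> gen_topology C E X"
    proof (intro allI impI)
      fix X S R assume a: "S \<in> gen_topology C E X \<and> is_sieve C X R \<and>
        (\<forall>f\<in>S. pb_sieve C f R \<in> gen_topology C E (Dom C f))"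
      show "R \<in> gen_topology C E X" unfolding gen_topology_def
      proof (intro CollectI allI impI)
        fix J assume J: "is_topology C J \<and> (\<forall>Y. \<forall>R\<in>E Y. sieve_gen C R \<in> J Y)"
        then have tj: "is_topology C J" and gj: "\<forall>Y. \<forall>R\<in>E Y. sieve_gen C R \<in> J Y" by blast+
        have "S \<in> J X" using a genD[OF _ tj gj] by blast
        moreover have "\<And>f. f \<in> S \<Longrightarrow> pb_sieve C f R \<in> J (Dom C f)" using a genD[OF _ tj gj] by blast
        ultimately show "R \<in> J X" using a top_local[OF tj] by blast
      qed
    qed
  qed
qed

lemma (in category) cd_topology_is_topology:
  assumes "cd_structure C P"
  shows "is_topology C (cd_topology C P)"
    and "\<And>Q. Q \<in> P \<Longrightarrow> sieve_gen C {sq_b Q, sq_d Q} \<in> cd_topology C P (sq11 C Q)"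
proof -
  show "is_topology C (cd_topology C P)"
    unfolding cd_topology_def
  proof (rule gen_topology_is_topology, intro allI ballI)
    fix Y R assume "R \<in> elem_covers C P Y"
    then obtain Q where Q: "R = {sq_b Q, sq_d Q}" "Q \<in> P" "sq11 C Q = Y" unfolding elem_covers_def by blast
    then have "is_square C Q" using assms unfolding cd_structure_def by blast
    then show "Y \<in> Obj C \<and> R \<subseteq> Arr C \<and> (\<forall>f\<in>R. Cod C f = Y)"
      using Q unfolding is_square_def sq11_def by auto
  qed
next
  fix Q assume "Q \<in> P"
  then show "sieve_gen C {sq_b Q, sq_d Q} \<in> cd_topology C P (sq11 C Q)"
    unfolding cd_topology_def gen_topology_def elem_covers_def by blast
qed

locale topology = category C for C :: "('o,'m) cat" +
  fixes J :: "'o \<Rightarrow> 'm set set"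
  assumes top: "is_topology C J"
begin

lemma J_obj: "S \<in> J X \<Longrightarrow> X \<in> Obj C" by (rule top_obj[OF top])
lemma J_sieve: "S \<in> J X \<Longrightarrow> is_sieve C X S" by (rule top_sieve[OF top])
lemma J_max: "X \<in> Obj C \<Longrightarrow> max_sieve C X \<in> J X" by (rule top_max[OF top])
lemma J_pb: "S \<in> J X \<Longrightarrow> f \<in> Arr C \<Longrightarrow> Cod C f = X \<Longrightarrow> pb_sieve C f S \<in> J (Dom C f)"
  by (rule top_pb[OF top])
lemma J_local: "S \<in> J X \<Longrightarrow> is_sieve C X R \<Longrightarrow> (\<And>f. f \<in> S \<Longrightarrow> pb_sieve C f R \<in> J (Dom C f)) \<Longrightarrow> R \<in> J X"
  by (rule top_local[OF top])

lemma J_up: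
  assumes "S \<in> J X" "is_sieve C X R" "S \<subseteq> R"
  shows "R \<in> J X"
proof (rule J_local[OF assms(1,2)])
  fix f assume f: "f \<in> S"
  then have fR: "f \<in> R" using assms(3) by blast
  have "f \<in> Arr C" using sieveD(1)[OF J_sieve[OF assms(1)] f] .
  then have "Dom C f \<in> Obj C" by simp
  then show "pb_sieve C f R \<in> J (Dom C f)" using pb_sieve_max[OF assms(2) fR] J_max by simp
qed

end

definition closed_sieve :: "('o,'m) cat \<Rightarrow> ('o \<Rightarrow> 'm set set) \<Rightarrow> 'o \<Rightarrow> 'm set \<Rightarrow> bool" where
  "closed_sieve C J X T \<longleftrightarrow> is_sieve C X T \<and>
     (\<forall>h\<in>Arr C. Cod C h = X \<and> pb_sieve C h T \<in> J (Dom C h) \<longrightarrow> h \<in> T)"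

context topology
begin

lemma closedD: "closed_sieve C J X T \<Longrightarrow> h \<in> Arr C \<Longrightarrow> Cod C h = X \<Longrightarrow> pb_sieve C h T \<in> J (Dom C h) \<Longrightarrow> h \<in> T"
  unfolding closed_sieve_def by blast

lemma closed_pb:
  assumes "closed_sieve C J X T" "f \<in> Arr C" "Cod C f = X"
  shows "closed_sieve C J (Dom C f) (pb_sieve C f T)"
  unfolding closed_sieve_def
proof (intro conjI ballI impI)
  show "is_sieve C (Dom C f) (pb_sieve C f T)" using pb_sieve_sieve assms unfolding closed_sieve_def by blast
next
  fix h assume h: "h \<in> Arr C" "Cod C h = Dom C f \<and> pb_sieve C h (pb_sieve C f T) \<in> J (Dom C h)"
  then have "pb_sieve C (Comp C f h) T \<in> J (Dom C (Comp C f h))" using pb_sieve_comp[of f h T] assms by simp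
  then have "Comp C f h \<in> T" using closedD[OF assms(1)] h assms by simp
  then show "h \<in> pb_sieve C f T" using h unfolding pb_sieve_def by simp
qed

lemma closed_max: "closed_sieve C J X (max_sieve C X)"
  unfolding closed_sieve_def using max_sieve_sieve unfolding max_sieve_def by blast

lemma closure_closed:
  assumes S: "is_sieve C X S"
  shows "closed_sieve C J X {h \<in> Arr C. Cod C h = X \<and> pb_sieve C h S \<in> J (Dom C h)}"
    (is "closed_sieve C J X ?cl")
  unfolding closed_sieve_def
proof (intro conjI ballI impI)
  show "is_sieve C X ?cl" unfolding is_sieve_def
  proof (intro conjI ballI impI)
    fix h g assume h: "h \<in> ?cl" and g: "g \<in> Arr C" "Cod C g = Dom C h"
    then have "pb_sieve C (Comp C h g) S = pb_sieve C g (pb_sieve C h S)" using pb_sieve_comp by simp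
    moreover have "pb_sieve C g (pb_sieve C h S) \<in> J (Dom C g)" using J_pb[of "pb_sieve C h S" "Dom C h" g] h g by simp
    ultimately show "Comp C h g \<in> ?cl" using h g by simp
  qed auto
next
  fix h assume h: "h \<in> Arr C" "Cod C h = X \<and> pb_sieve C h ?cl \<in> J (Dom C h)"
  have "pb_sieve C h S \<in> J (Dom C h)"
  proof (rule J_local)
    show "pb_sieve C h ?cl \<in> J (Dom C h)" using h by simp
    show "is_sieve C (Dom C h) (pb_sieve C h S)" using pb_sieve_sieve S h by simp
  next
    fix m assume "m \<in> pb_sieve C h ?cl"
    then have m: "m \<in> Arr C" "Cod C m = Dom C h" "pb_sieve C (Comp C h m) S \<in> J (Dom C (Comp C h m))"
      unfolding pb_sieve_def by auto
    then show "pb_sieve C m (pb_sieve C h S) \<in> J (Dom C m)" using pb_sieve_comp[of h m S] h by simp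
  qed
  then show "h \<in> ?cl" using h by simp
qed

lemma closed_sub:
  assumes S: "S \<in> J X" and T1: "closed_sieve C J X T1" and T2: "closed_sieve C J X T2"
    and eq: "\<And>f. f \<in> S \<Longrightarrow> pb_sieve C f T1 = pb_sieve C f T2"
  shows "T1 \<subseteq> T2"
proof
  fix h assume hT1: "h \<in> T1"
  have s1: "is_sieve C X T1" and s2: "is_sieve C X T2" using T1 T2 unfolding closed_sieve_def by auto
  have h: "h \<in> Arr C" "Cod C h = X" using sieveD[OF s1 hT1] by auto
  have "pb_sieve C h S \<subseteq> pb_sieve C h T2"
  proof
    fix k assume "k \<in> pb_sieve C h S"
    then have k: "k \<in> Arr C" "Cod C k = Dom C h" "Comp C h k \<in> S" unfolding pb_sieve_def by auto
    have "Comp C h k \<in> T1" using sieve_comp[OF s1 hT1] k by simp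
    then have "Idm C (Dom C k) \<in> pb_sieve C (Comp C h k) T1"
      using k h id_right[of "Comp C h k"] unfolding pb_sieve_def by simp
    then have "Idm C (Dom C k) \<in> pb_sieve C (Comp C h k) T2" using eq k by simp
    then have "Comp C h k \<in> T2" using k h id_right[of "Comp C h k"] unfolding pb_sieve_def by simp
    then show "k \<in> pb_sieve C h T2" using k unfolding pb_sieve_def by simp
  qed
  moreover have "pb_sieve C h S \<in> J (Dom C h)" using J_pb S h by simp
  ultimately have "pb_sieve C h T2 \<in> J (Dom C h)" using J_up pb_sieve_sieve[OF s2] h by blast
  then show "h \<in> T2" using closedD[OF T2] h by simp
qed

lemma closed_unique:
  assumes S: "S \<in> J X" and T1: "closed_sieve C J X T1" and T2: "closed_sieve C J X T2"
    and eq: "\<And>f. f \<in> S \<Longrightarrow> pb_sieve C f T1 = pb_sieve C f T2"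
  shows "T1 = T2"
  using closed_sub[OF S T1 T2 eq] closed_sub[OF S T2 T1] eq by blast

end

context topology
begin

lemma omega_presheaf:
  assumes e: "inj (e :: 'm set \<Rightarrow> 'v)"
  shows "is_presheaf C (\<lambda>Z. e ` {T. closed_sieve C J Z T}) (\<lambda>h y. e (pb_sieve C h (inv e y)))"
  unfolding is_presheaf_def
proof (intro conjI ballI impI)
  fix f x assume f: "f \<in> Arr C" and x: "x \<in> e ` {T. closed_sieve C J (Cod C f) T}"
  then obtain T where T: "x = e T" "closed_sieve C J (Cod C f) T" by blast
  have "inv e x = T" using T e by simp
  then show "e (pb_sieve C f (inv e x)) \<in> e ` {T. closed_sieve C J (Dom C f) T}"
    using closed_pb[OF T(2) f] by blast
next
  fix X x assume X: "X \<in> Obj C" and x: "x \<in> e ` {T. closed_sieve C J X T}"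
  then obtain T where T: "x = e T" "closed_sieve C J X T" by blast
  have "inv e x = T" using T e by simp
  moreover have "is_sieve C X T" using T unfolding closed_sieve_def by blast
  ultimately show "e (pb_sieve C (Idm C X) (inv e x)) = x" using pb_sieve_id[OF _ X] T by simp
next
  fix f g x assume f: "f \<in> Arr C" and g: "g \<in> Arr C" and fg: "Cod C f = Dom C g"
    and x: "x \<in> e ` {T. closed_sieve C J (Cod C g) T}"
  then obtain T where T: "x = e T" "closed_sieve C J (Cod C g) T" by blast
  have ix: "inv e x = T" using T e by simp
  have "inv e (e (pb_sieve C g T)) = pb_sieve C g T" using e by simp
  then show "e (pb_sieve C (Comp C g f) (inv e x)) = e (pb_sieve C f (inv e (e (pb_sieve C g (inv e x)))))"
    using pb_sieve_comp[OF g f fg] ix by simp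
qed

lemma omega_sheaf:
  assumes e: "inj (e :: 'm set \<Rightarrow> 'v)"
  shows "is_sheaf C J (\<lambda>Z. e ` {T. closed_sieve C J Z T}) (\<lambda>h y. e (pb_sieve C h (inv e y)))"
  unfolding is_sheaf_def
proof (intro conjI allI impI omega_presheaf[OF e])
  fix X S s
  assume a: "S \<in> J X \<and> (\<forall>f\<in>S. s f \<in> e ` {T. closed_sieve C J (Dom C f) T}) \<and>
       (\<forall>f\<in>S. \<forall>g\<in>Arr C. Cod C g = Dom C f \<longrightarrow> s (Comp C f g) = e (pb_sieve C g (inv e (s f))))"
  then have S: "S \<in> J X" by blast
  have Ssv: "is_sieve C X S" using J_sieve[OF S] .
  define Tf where "Tf = (\<lambda>f. inv e (s f))"
  have Tf_cl: "\<And>f. f \<in> S \<Longrightarrow> closed_sieve C J (Dom C f) (Tf f)"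
  proof -
    fix f assume "f \<in> S"
    then obtain T where "s f = e T" "closed_sieve C J (Dom C f) T" using a by blast
    then show "closed_sieve C J (Dom C f) (Tf f)" unfolding Tf_def using e by simp
  qed
  have Tf_e: "\<And>f. f \<in> S \<Longrightarrow> e (Tf f) = s f"
  proof -
    fix f assume "f \<in> S"
    then obtain T where "s f = e T" using a by blast
    then show "e (Tf f) = s f" unfolding Tf_def using e by simp
  qed
  have Tf_match: "\<And>f g. f \<in> S \<Longrightarrow> g \<in> Arr C \<Longrightarrow> Cod C g = Dom C f \<Longrightarrow> Tf (Comp C f g) = pb_sieve C g (Tf f)"
  proof -
    fix f g assume f: "f \<in> S" and g: "g \<in> Arr C" "Cod C g = Dom C f"
    then have "s (Comp C f g) = e (pb_sieve C g (Tf f))" using a unfolding Tf_def by blast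
    then show "Tf (Comp C f g) = pb_sieve C g (Tf f)" unfolding Tf_def using e by simp
  qed
  have Tf_sv: "\<And>f. f \<in> S \<Longrightarrow> is_sieve C (Dom C f) (Tf f)" using Tf_cl unfolding closed_sieve_def by blast
  define T where "T = {h \<in> Arr C. Cod C h = X \<and>
      (\<forall>k\<in>Arr C. Cod C k = Dom C h \<and> Comp C h k \<in> S \<longrightarrow> Idm C (Dom C k) \<in> Tf (Comp C h k))}"
  have key: "\<And>f. f \<in> S \<Longrightarrow> pb_sieve C f T = Tf f"
  proof -
    fix f assume f: "f \<in> S"
    have fA: "f \<in> Arr C" and fX: "Cod C f = X" using sieveD[OF Ssv f] by auto
    show "pb_sieve C f T = Tf f"
    proof
      show "pb_sieve C f T \<subseteq> Tf f"
      proof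
        fix g assume "g \<in> pb_sieve C f T"
        then have g: "g \<in> Arr C" "Cod C g = Dom C f" "Comp C f g \<in> T" unfolding pb_sieve_def by auto
        have fgS: "Comp C f g \<in> S" using sieve_comp[OF Ssv f g(1,2)] .
        have dg: "Dom C g \<in> Obj C" using g by simp
        have Tall: "\<forall>k\<in>Arr C. Cod C k = Dom C (Comp C f g) \<and> Comp C (Comp C f g) k \<in> S \<longrightarrow>
            Idm C (Dom C k) \<in> Tf (Comp C (Comp C f g) k)" using g(3) unfolding T_def by blast
        have fgA: "Comp C f g \<in> Arr C" "Dom C (Comp C f g) = Dom C g" using g fA by auto
        have i: "Idm C (Dom C g) \<in> Arr C" "Cod C (Idm C (Dom C g)) = Dom C (Comp C f g)"
          "Comp C (Comp C f g) (Idm C (Dom C g)) = Comp C f g" "Dom C (Idm C (Dom C g)) = Dom C g"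
          using dg fgA id_right[of "Comp C f g"] by auto
        have "Idm C (Dom C g) \<in> Tf (Comp C f g)" using Tall i fgS by metis
        then have "Idm C (Dom C g) \<in> pb_sieve C g (Tf f)" using Tf_match[OF f g(1,2)] by simp
        then show "g \<in> Tf f" unfolding pb_sieve_def using g by simp
      qed
    next
      show "Tf f \<subseteq> pb_sieve C f T"
      proof
        fix g assume gT: "g \<in> Tf f"
        have g: "g \<in> Arr C" "Cod C g = Dom C f" using sieveD[OF Tf_sv[OF f] gT] by auto
        have "Comp C f g \<in> T" unfolding T_def
        proof (intro CollectI conjI ballI impI)
          show "Comp C f g \<in> Arr C" using g fA by simp
          show "Cod C (Comp C f g) = X" using g fA fX by simp
        next
          fix k assume k: "k \<in> Arr C" "Cod C k = Dom C (Comp C f g) \<and> Comp C (Comp C f g) k \<in> S"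
          have kd: "Cod C k = Dom C g" using k g fA by simp
          have eq: "Comp C (Comp C f g) k = Comp C f (Comp C g k)" using assoc[of k g f] k kd g fA by simp
          have gk: "Comp C g k \<in> Arr C" "Cod C (Comp C g k) = Dom C f" using g k kd by auto
          have "Tf (Comp C (Comp C f g) k) = pb_sieve C (Comp C g k) (Tf f)"
            using Tf_match[OF f gk] eq by simp
          moreover have "Comp C g k \<in> Tf f" using sieve_comp[OF Tf_sv[OF f] gT k(1) kd] .
          moreover have "Dom C (Comp C g k) = Dom C k" using g k kd by simp
          ultimately show "Idm C (Dom C k) \<in> Tf (Comp C (Comp C f g) k)"
            unfolding pb_sieve_def using gk k id_right[of "Comp C g k"] by simp
        qed
        then show "g \<in> pb_sieve C f T" unfolding pb_sieve_def using g by simp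
      qed
    qed
  qed
  have Tsv: "is_sieve C X T" unfolding is_sieve_def
  proof (intro conjI ballI impI)
    show "T \<subseteq> Arr C" unfolding T_def by blast
  next
    fix h assume "h \<in> T" then show "Cod C h = X" unfolding T_def by blast
  next
    fix h g assume hT: "h \<in> T" and g: "g \<in> Arr C" "Cod C g = Dom C h"
    have h: "h \<in> Arr C" "Cod C h = X" using hT unfolding T_def by auto
    show "Comp C h g \<in> T" unfolding T_def
    proof (intro CollectI conjI ballI impI)
      show "Comp C h g \<in> Arr C" "Cod C (Comp C h g) = X" using h g by auto
    next
      fix k assume k: "k \<in> Arr C" "Cod C k = Dom C (Comp C h g) \<and> Comp C (Comp C h g) k \<in> S"
      have kd: "Cod C k = Dom C g" using k g h by simp
      have eq: "Comp C (Comp C h g) k = Comp C h (Comp C g k)" using assoc[of k g h] k kd g h by simp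
      have gk: "Comp C g k \<in> Arr C" "Cod C (Comp C g k) = Dom C h" "Dom C (Comp C g k) = Dom C k"
        using g k kd by auto
      have Tall: "\<forall>k\<in>Arr C. Cod C k = Dom C h \<and> Comp C h k \<in> S \<longrightarrow>
            Idm C (Dom C k) \<in> Tf (Comp C h k)" using hT unfolding T_def by blast
      have "Comp C h (Comp C g k) \<in> S" using k eq by simp
      then have "Idm C (Dom C (Comp C g k)) \<in> Tf (Comp C h (Comp C g k))"
        using Tall gk by blast
      then show "Idm C (Dom C k) \<in> Tf (Comp C (Comp C h g) k)" using eq gk by simp
    qed
  qed
  have Tcl: "closed_sieve C J X T" unfolding closed_sieve_def
  proof (intro conjI ballI impI Tsv)
    fix h assume h: "h \<in> Arr C" "Cod C h = X \<and> pb_sieve C h T \<in> J (Dom C h)"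
    show "h \<in> T" unfolding T_def
    proof (intro CollectI conjI ballI impI)
      show "h \<in> Arr C" "Cod C h = X" using h by auto
    next
      fix k assume k: "k \<in> Arr C" "Cod C k = Dom C h \<and> Comp C h k \<in> S"
      have hk: "Comp C h k \<in> S" using k by blast
      have dk: "Dom C (Comp C h k) = Dom C k" using h k by simp
      have "pb_sieve C k (pb_sieve C h T) \<in> J (Dom C k)" using J_pb[of "pb_sieve C h T" "Dom C h" k] h k by simp
      then have "pb_sieve C (Comp C h k) T \<in> J (Dom C k)" using pb_sieve_comp[of h k T] h k by simp
      then have TJ: "Tf (Comp C h k) \<in> J (Dom C k)" using key[OF hk] by simp
      have cl: "closed_sieve C J (Dom C k) (Tf (Comp C h k))" using Tf_cl[OF hk] dk by simp
      have ok: "Dom C k \<in> Obj C" using k by simp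
      have "pb_sieve C (Idm C (Dom C k)) (Tf (Comp C h k)) = Tf (Comp C h k)"
        using pb_sieve_id[OF _ ok] cl unfolding closed_sieve_def by blast
      then show "Idm C (Dom C k) \<in> Tf (Comp C h k)"
        using closedD[OF cl, of "Idm C (Dom C k)"] ok TJ by simp
    qed
  qed
  show "\<exists>!x. x \<in> e ` {T. closed_sieve C J X T} \<and> (\<forall>f\<in>S. e (pb_sieve C f (inv e x)) = s f)"
  proof
    show "e T \<in> e ` {T. closed_sieve C J X T} \<and> (\<forall>f\<in>S. e (pb_sieve C f (inv e (e T))) = s f)"
      using Tcl key Tf_e e by simp
  next
    fix y assume y: "y \<in> e ` {T. closed_sieve C J X T} \<and> (\<forall>f\<in>S. e (pb_sieve C f (inv e y)) = s f)"
    then obtain T' where T': "y = e T'" "closed_sieve C J X T'" by blast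
    have "\<And>f. f \<in> S \<Longrightarrow> pb_sieve C f T' = pb_sieve C f T"
    proof -
      fix f assume f: "f \<in> S"
      then have "e (pb_sieve C f T') = e (Tf f)" using y T' Tf_e e by simp
      then show "pb_sieve C f T' = pb_sieve C f T" using key[OF f] e by (simp add: inj_eq)
    qed
    then have "T' = T" using closed_unique[OF S T'(2) Tcl] by blast
    then show "y = e T" using T' by simp
  qed
qed

end

locale cd_site = topology C J for C :: "('o,'m) cat" and J +
  fixes P :: "'m square set"
  assumes cds: "cd_structure C P"
    and gens: "\<And>Q. Q \<in> P \<Longrightarrow> sieve_gen C {sq_b Q, sq_d Q} \<in> J (sq11 C Q)"
begin

lemma sq_facts:
  assumes "Q \<in> P"
  shows "sq_b Q \<in> Arr C" "sq_d Q \<in> Arr C" "Dom C (sq_b Q) = sq01 C Q" "Dom C (sq_d Q) = sq10 C Q"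
    "Cod C (sq_b Q) = sq11 C Q" "Cod C (sq_d Q) = sq11 C Q"
proof -
  have "is_square C Q" using assms cds unfolding cd_structure_def by blast
  then show "sq_b Q \<in> Arr C" "sq_d Q \<in> Arr C" "Dom C (sq_b Q) = sq01 C Q" "Dom C (sq_d Q) = sq10 C Q"
    "Cod C (sq_b Q) = sq11 C Q" "Cod C (sq_d Q) = sq11 C Q"
    unfolding is_square_def sq01_def sq10_def sq11_def by auto
qed

lemma pb_comp_cover:
  assumes f: "f \<in> Arr C" and R: "R \<subseteq> Arr C" "\<forall>h\<in>R. Cod C h = Cod C f"
    and R': "R' \<subseteq> Arr C" "\<forall>r\<in>R'. Cod C r = Dom C f" "sieve_gen C R' \<in> J (Dom C f)"
    and inc: "\<forall>r\<in>R'. Comp C f r \<in> R"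
    and g: "g \<in> Arr C" "Cod C g = Dom C f"
  shows "pb_sieve C (Comp C f g) (sieve_gen C R) \<in> J (Dom C g)"
proof -
  have svR: "is_sieve C (Cod C f) (sieve_gen C R)" using sieve_gen_sieve[OF R] .
  have fg: "Comp C f g \<in> Arr C" "Cod C (Comp C f g) = Cod C f" "Dom C (Comp C f g) = Dom C g" using f g by auto
  have sv: "is_sieve C (Dom C g) (pb_sieve C (Comp C f g) (sieve_gen C R))"
    using pb_sieve_sieve[OF svR fg(1,2)] fg(3) by simp
  have J1: "pb_sieve C g (sieve_gen C R') \<in> J (Dom C g)" using J_pb[OF R'(3) g] .
  have "pb_sieve C g (sieve_gen C R') \<subseteq> pb_sieve C (Comp C f g) (sieve_gen C R)"
  proof
    fix m assume "m \<in> pb_sieve C g (sieve_gen C R')"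
    then have m: "m \<in> Arr C" "Cod C m = Dom C g" "Comp C g m \<in> sieve_gen C R'" unfolding pb_sieve_def by auto
    from m(3) obtain r n where rn: "r \<in> R'" "n \<in> Arr C" "Cod C n = Dom C r" "Comp C g m = Comp C r n"
      by (rule sieve_gen_E)
    have rA: "r \<in> Arr C" "Cod C r = Dom C f" using rn R' by auto
    have "Comp C (Comp C f g) m = Comp C f (Comp C g m)" using assoc[of m g f] m g f by simp
    also have "\<dots> = Comp C f (Comp C r n)" using rn by simp
    also have "\<dots> = Comp C (Comp C f r) n" using assoc[of n r f] rn rA f by simp
    finally have eq: "Comp C (Comp C f g) m = Comp C (Comp C f r) n" .
    have "Comp C (Comp C f r) n \<in> sieve_gen C R"
      using in_sieve_gen[of "Comp C f r" R n] inc rn rA f by simp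
    then show "m \<in> pb_sieve C (Comp C f g) (sieve_gen C R)" unfolding pb_sieve_def using m fg eq by simp
  qed
  then show ?thesis using J_up[OF J1 sv] by simp
qed

lemma cover_step:
  assumes Q: "Q \<in> P"
    and R1: "R1 \<subseteq> Arr C" "\<forall>f\<in>R1. Cod C f = sq01 C Q" "sieve_gen C R1 \<in> J (sq01 C Q)"
    and R2: "R2 \<subseteq> Arr C" "\<forall>f\<in>R2. Cod C f = sq10 C Q" "sieve_gen C R2 \<in> J (sq10 C Q)"
  defines "R \<equiv> (\<lambda>y. Comp C (sq_b Q) y) ` R1 \<union> (\<lambda>t. Comp C (sq_d Q) t) ` R2"
  shows "R \<subseteq> Arr C" "\<forall>f\<in>R. Cod C f = sq11 C Q" "sieve_gen C R \<in> J (sq11 C Q)"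
proof -
  note sq = sq_facts[OF Q]
  show RA: "R \<subseteq> Arr C" unfolding R_def using R1 R2 sq by auto
  show RC: "\<forall>f\<in>R. Cod C f = sq11 C Q" unfolding R_def using R1 R2 sq by auto
  have svR: "is_sieve C (sq11 C Q) (sieve_gen C R)" using sieve_gen_sieve[OF RA RC] .
  show "sieve_gen C R \<in> J (sq11 C Q)"
  proof (rule J_local[OF gens[OF Q] svR])
    fix k assume "k \<in> sieve_gen C {sq_b Q, sq_d Q}"
    then obtain f g where fg: "f \<in> {sq_b Q, sq_d Q}" "g \<in> Arr C" "Cod C g = Dom C f" "k = Comp C f g"
      by (rule sieve_gen_E)
    have RC': "\<forall>h\<in>R. Cod C h = Cod C f" using RC fg(1) sq by auto
    have dk: "Dom C k = Dom C g" using fg sq by auto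
    show "pb_sieve C k (sieve_gen C R) \<in> J (Dom C k)"
    proof (cases "f = sq_b Q")
      case True
      have a1: "\<forall>r\<in>R1. Cod C r = Dom C f" "sieve_gen C R1 \<in> J (Dom C f)" using R1(2,3) sq(3) True by auto
      have a2: "\<forall>r\<in>R1. Comp C f r \<in> R" unfolding R_def using True by blast
      have "pb_sieve C (Comp C f g) (sieve_gen C R) \<in> J (Dom C g)"
        using pb_comp_cover[OF _ RA RC' R1(1) a1 a2 fg(2,3)] True sq(1) by blast
      then show ?thesis using fg dk by simp
    next
      case False
      then have fd: "f = sq_d Q" using fg by blast
      have a1: "\<forall>r\<in>R2. Cod C r = Dom C f" "sieve_gen C R2 \<in> J (Dom C f)" using R2(2,3) sq(4) fd by auto
      have a2: "\<forall>r\<in>R2. Comp C f r \<in> R" unfolding R_def using fd by blast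
      have "pb_sieve C (Comp C f g) (sieve_gen C R) \<in> J (Dom C g)"
        using pb_comp_cover[OF _ RA RC' R2(1) a1 a2 fg(2,3)] fd sq(2) by blast
      then show ?thesis using fg dk by simp
    qed
  qed
qed

lemma simple_cover_covers:
  "simple_cover C P X R \<Longrightarrow> R \<subseteq> Arr C \<and> (\<forall>f\<in>R. Cod C f = X) \<and> sieve_gen C R \<in> J X"
proof (induction rule: simple_cover.induct)
  case (iso f)
  then have f: "f \<in> Arr C" unfolding is_iso_def by blast
  have "sieve_gen C {f} = max_sieve C (Cod C f)" using iso_sieve_gen[OF iso] .
  then show ?case using f J_max[of "Cod C f"] by simp
next
  case (step Q R1 R2)
  have a: "R1 \<subseteq> Arr C" "\<forall>f\<in>R1. Cod C f = sq01 C Q" "sieve_gen C R1 \<in> J (sq01 C Q)"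
    using step.IH(1) by blast+
  have b: "R2 \<subseteq> Arr C" "\<forall>f\<in>R2. Cod C f = sq10 C Q" "sieve_gen C R2 \<in> J (sq10 C Q)"
    using step.IH(2) by blast+
  note c = cover_step[OF step.hyps(1) a b]
  show ?case by (intro conjI c)
qed

end

locale functor_l = C: category C + D: category D
  for C :: "('o,'m) cat" and D :: "('p,'n) cat" +
  fixes uo :: "'o \<Rightarrow> 'p" and um :: "'m \<Rightarrow> 'n"
  assumes fn: "is_functor C D uo um"
begin
lemma fobj[simp]: "X \<in> Obj C \<Longrightarrow> uo X \<in> Obj D" using fn unfolding is_functor_def by blast
lemma fid[simp]: "X \<in> Obj C \<Longrightarrow> um (Idm C X) = Idm D (uo X)" using fn unfolding is_functor_def by blast
lemma farr[simp]: "f \<in> Arr C \<Longrightarrow> um f \<in> Arr D" using fn unfolding is_functor_def by blast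
lemma fdom[simp]: "f \<in> Arr C \<Longrightarrow> Dom D (um f) = uo (Dom C f)" using fn unfolding is_functor_def by blast
lemma fcod[simp]: "f \<in> Arr C \<Longrightarrow> Cod D (um f) = uo (Cod C f)" using fn unfolding is_functor_def by blast
lemma fcomp: "f \<in> Arr C \<Longrightarrow> g \<in> Arr C \<Longrightarrow> Cod C f = Dom C g \<Longrightarrow> um (Comp C g f) = Comp D (um g) (um f)"
  using fn unfolding is_functor_def by blast
end

locale two_sites = functor_l C D uo um + C: cd_site C JC PC + D: cd_site D JD PD
  for C :: "('o,'m) cat" and D :: "('p,'n) cat" and uo um JC PC JD PD
begin

lemma lift_simple:
  assumes lift: "\<forall>X'\<in>Obj C. \<forall>Q\<in>PD. sq11 D Q = uo X' \<longrightarrow> (\<exists>Q'\<in>PC. map_sq um Q' = Q \<and> sq11 C Q' = X')"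
  shows "simple_cover D PD Y R0 \<Longrightarrow> \<forall>X\<in>Obj C. uo X = Y \<longrightarrow>
     (\<exists>R'. covering_family C JC X R' \<and> (\<forall>g\<in>R'. \<exists>f0\<in>R0. \<exists>h\<in>Arr D. Cod D h = Dom D f0 \<and> um g = Comp D f0 h))"
proof (induction rule: simple_cover.induct)
  case (iso f)
  show ?case
  proof (intro ballI impI)
    fix X assume X: "X \<in> Obj C" "uo X = Cod D f"
    obtain g where g: "g \<in> Arr D" "Dom D g = Cod D f" "Cod D g = Dom D f"
      "Comp D g f = Idm D (Dom D f)" "Comp D f g = Idm D (Cod D f)" using D.iso_inv[OF iso] by blast
    have cov: "covering_family C JC X {Idm C X}"
      unfolding covering_family_def
    proof (intro conjI ballI)
      show "{Idm C X} \<subseteq> Arr C" using X by simp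
      fix h assume "h \<in> {Idm C X}" then show "Cod C h = X" using X by simp
    next
      have "sieve_gen C {Idm C X} = max_sieve C X" using C.iso_sieve_gen[OF C.id_iso[OF X(1)]] X by simp
      then show "sieve_gen C {Idm C X} \<in> JC X" using C.J_max[OF X(1)] by simp
    qed
    have "\<forall>g'\<in>{Idm C X}. \<exists>f0\<in>{f}. \<exists>h\<in>Arr D. Cod D h = Dom D f0 \<and> um g' = Comp D f0 h"
      using g X by auto
    then show "\<exists>R'. covering_family C JC X R' \<and> (\<forall>g\<in>R'. \<exists>f0\<in>{f}. \<exists>h\<in>Arr D. Cod D h = Dom D f0 \<and> um g = Comp D f0 h)"
      using cov by blast
  qed
next
  case (step Q R1 R2)
  show ?case
  proof (intro ballI impI)
    fix X assume X: "X \<in> Obj C" "uo X = sq11 D Q"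
    obtain Q' where Q': "Q' \<in> PC" "map_sq um Q' = Q" "sq11 C Q' = X" using lift X step.hyps(1) by metis
    obtain a' b' c' d' where Qt: "Q' = (a', b', c', d')" by (cases Q') auto
    have bQ: "sq_b Q = um b'" "sq_d Q = um d'" using Q'(2) Qt by auto
    note sqC = C.sq_facts[OF Q'(1)]
    note sqD = D.sq_facts[OF step.hyps(1)]
    have bA: "b' \<in> Arr C" "d' \<in> Arr C" using sqC Qt by auto
    have o1: "uo (sq01 C Q') = sq01 D Q" using sqC(3) sqD(3) bQ bA Qt by (metis fdom sq_b.simps)
    have o2: "uo (sq10 C Q') = sq10 D Q" using sqC(4) sqD(4) bQ bA Qt by (metis fdom sq_d.simps)
    have X1: "sq01 C Q' \<in> Obj C" "sq10 C Q' \<in> Obj C" using sqC C.dom_obj by metis+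
    obtain R1' where R1': "covering_family C JC (sq01 C Q') R1'"
      "\<forall>g\<in>R1'. \<exists>f0\<in>R1. \<exists>h\<in>Arr D. Cod D h = Dom D f0 \<and> um g = Comp D f0 h"
      using step.IH(1) X1(1) o1 by blast
    obtain R2' where R2': "covering_family C JC (sq10 C Q') R2'"
      "\<forall>g\<in>R2'. \<exists>f0\<in>R2. \<exists>h\<in>Arr D. Cod D h = Dom D f0 \<and> um g = Comp D f0 h"
      using step.IH(2) X1(2) o2 by blast
    have c1: "R1' \<subseteq> Arr C" "\<forall>f\<in>R1'. Cod C f = sq01 C Q'" "sieve_gen C R1' \<in> JC (sq01 C Q')"
      using R1'(1) unfolding covering_family_def by blast+
    have c2: "R2' \<subseteq> Arr C" "\<forall>f\<in>R2'. Cod C f = sq10 C Q'" "sieve_gen C R2' \<in> JC (sq10 C Q')"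
      using R2'(1) unfolding covering_family_def by blast+
    define R' where "R' = (\<lambda>y. Comp C (sq_b Q') y) ` R1' \<union> (\<lambda>t. Comp C (sq_d Q') t) ` R2'"
    note cs = C.cover_step[OF Q'(1) c1 c2]
    have cov: "covering_family C JC X R'" unfolding covering_family_def R'_def using cs Q'(3) by simp
    have sc1: "R1 \<subseteq> Arr D" "\<forall>f\<in>R1. Cod D f = sq01 D Q" using D.simple_cover_covers[OF step.hyps(2)] by blast+
    have sc2: "R2 \<subseteq> Arr D" "\<forall>f\<in>R2. Cod D f = sq10 D Q" using D.simple_cover_covers[OF step.hyps(3)] by blast+
    have fac: "\<forall>g\<in>R'. \<exists>f0\<in>(\<lambda>y. Comp D (sq_b Q) y) ` R1 \<union> (\<lambda>t. Comp D (sq_d Q) t) ` R2.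
        \<exists>h\<in>Arr D. Cod D h = Dom D f0 \<and> um g = Comp D f0 h"
    proof
      fix g assume "g \<in> R'"
      then consider (b) g1 where "g1 \<in> R1'" "g = Comp C (sq_b Q') g1"
        | (d) g2 where "g2 \<in> R2'" "g = Comp C (sq_d Q') g2" unfolding R'_def by blast
      then show "\<exists>f0\<in>(\<lambda>y. Comp D (sq_b Q) y) ` R1 \<union> (\<lambda>t. Comp D (sq_d Q) t) ` R2.
        \<exists>h\<in>Arr D. Cod D h = Dom D f0 \<and> um g = Comp D f0 h"
      proof cases
        case b
        obtain f0 h where fh: "f0 \<in> R1" "h \<in> Arr D" "Cod D h = Dom D f0" "um g1 = Comp D f0 h"
          using R1'(2) b(1) by blast
        have g1: "g1 \<in> Arr C" "Cod C g1 = Dom C (sq_b Q')" using c1 b(1) sqC by auto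
        have f0: "f0 \<in> Arr D" "Cod D f0 = Dom D (sq_b Q)" using sc1 fh(1) sqD by auto
        have "um g = Comp D (um (sq_b Q')) (um g1)" using b(2) fcomp[OF g1(1) sqC(1) g1(2)] by simp
        also have "\<dots> = Comp D (sq_b Q) (Comp D f0 h)" using bQ Qt fh(4) by simp
        also have "\<dots> = Comp D (Comp D (sq_b Q) f0) h" using D.assoc[OF fh(2) f0(1) sqD(1) fh(3) f0(2)] .
        finally have "um g = Comp D (Comp D (sq_b Q) f0) h" .
        moreover have "Dom D (Comp D (sq_b Q) f0) = Dom D f0" using f0 sqD by simp
        moreover have mem: "Comp D (sq_b Q) f0 \<in> (\<lambda>y. Comp D (sq_b Q) y) ` R1 \<union> (\<lambda>t. Comp D (sq_d Q) t) ` R2"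
          using fh(1) by blast
        ultimately show ?thesis using fh(3) by (intro bexI[OF bexI[OF _ fh(2)] mem]) simp
      next
        case d
        obtain f0 h where fh: "f0 \<in> R2" "h \<in> Arr D" "Cod D h = Dom D f0" "um g2 = Comp D f0 h"
          using R2'(2) d(1) by blast
        have g2: "g2 \<in> Arr C" "Cod C g2 = Dom C (sq_d Q')" using c2 d(1) sqC by auto
        have f0: "f0 \<in> Arr D" "Cod D f0 = Dom D (sq_d Q)" using sc2 fh(1) sqD by auto
        have "um g = Comp D (um (sq_d Q')) (um g2)" using d(2) fcomp[OF g2(1) sqC(2) g2(2)] by simp
        also have "\<dots> = Comp D (sq_d Q) (Comp D f0 h)" using bQ Qt fh(4) by simp
        also have "\<dots> = Comp D (Comp D (sq_d Q) f0) h" using D.assoc[OF fh(2) f0(1) sqD(2) fh(3) f0(2)] .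
        finally have "um g = Comp D (Comp D (sq_d Q) f0) h" .
        moreover have "Dom D (Comp D (sq_d Q) f0) = Dom D f0" using f0 sqD by simp
        moreover have mem: "Comp D (sq_d Q) f0 \<in> (\<lambda>y. Comp D (sq_b Q) y) ` R1 \<union> (\<lambda>t. Comp D (sq_d Q) t) ` R2"
          using fh(1) by blast
        ultimately show ?thesis using fh(3) by (intro bexI[OF bexI[OF _ fh(2)] mem]) simp
      qed
    qed
    show "\<exists>R'. covering_family C JC X R' \<and> (\<forall>g\<in>R'. \<exists>f0\<in>(\<lambda>y. Comp D (sq_b Q) y) ` R1 \<union> (\<lambda>t. Comp D (sq_d Q) t) ` R2.
        \<exists>h\<in>Arr D. Cod D h = Dom D f0 \<and> um g = Comp D f0 h)"
      using cov fac by blast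
  qed
qed

lemma cocont:
  assumes compD: "cd_complete D PD" and compJ: "JD = cd_topology D PD"
    and lift: "\<forall>X'\<in>Obj C. \<forall>Q\<in>PD. sq11 D Q = uo X' \<longrightarrow> (\<exists>Q'\<in>PC. map_sq um Q' = Q \<and> sq11 C Q' = X')"
  shows "cocontinuous_site C JC D JD uo um"
  unfolding cocontinuous_site_def
proof (intro ballI allI impI)
  fix X R assume X: "X \<in> Obj C" and R: "covering_family D JD (uo X) R"
  have RA: "R \<subseteq> Arr D" "\<forall>f\<in>R. Cod D f = uo X" "sieve_gen D R \<in> JD (uo X)"
    using R unfolding covering_family_def by blast+
  obtain R0 where R0: "simple_cover D PD (uo X) R0" "sieve_gen D R0 \<subseteq> sieve_gen D R"
    using compD RA(3) compJ unfolding cd_complete_def by blast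
  have R0A: "R0 \<subseteq> Arr D" using D.simple_cover_covers[OF R0(1)] by blast
  obtain R' where R': "covering_family C JC X R'"
      "\<forall>g\<in>R'. \<exists>f0\<in>R0. \<exists>h\<in>Arr D. Cod D h = Dom D f0 \<and> um g = Comp D f0 h"
    using lift_simple[OF lift R0(1)] X by blast
  have "\<forall>g\<in>R'. \<exists>f\<in>R. \<exists>h\<in>Arr D. Cod D h = Dom D f \<and> um g = Comp D f h"
  proof
    fix g assume "g \<in> R'"
    then obtain f0 h where fh: "f0 \<in> R0" "h \<in> Arr D" "Cod D h = Dom D f0" "um g = Comp D f0 h" using R'(2) by blast
    have "f0 \<in> sieve_gen D R0" using D.in_sieve_gen_self[OF fh(1)] R0A fh(1) by blast
    then have "f0 \<in> sieve_gen D R" using R0(2) by blast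
    then obtain f k where fk: "f \<in> R" "k \<in> Arr D" "Cod D k = Dom D f" "f0 = Comp D f k" by (rule D.sieve_gen_E)
    have fA: "f \<in> Arr D" using RA fk by blast
    have hk: "Cod D h = Dom D k" using fh fk fA by simp
    have "um g = Comp D f (Comp D k h)" using fh(4) fk(4) D.assoc[OF fh(2) fk(2) fA hk fk(3)] by simp
    moreover have "Comp D k h \<in> Arr D" "Cod D (Comp D k h) = Dom D f" using fh(2) fk(2,3) hk by auto
    ultimately show "\<exists>f\<in>R. \<exists>h\<in>Arr D. Cod D h = Dom D f \<and> um g = Comp D f h" using fk(1) by blast
  qed
  then show "\<exists>R'. covering_family C JC X R' \<and> (\<forall>g\<in>R'. \<exists>f\<in>R. \<exists>h\<in>Arr D. Cod D h = Dom D f \<and> um g = Comp D f h)"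
    using R'(1) by blast
qed

end

lemma sheaf_unique:
  assumes sh: "is_sheaf C J F0 F1" and S: "S \<in> J X"
    and sv: "\<forall>f\<in>S. s f \<in> F0 (Dom C f)"
    and mt: "\<forall>f\<in>S. \<forall>g\<in>Arr C. Cod C g = Dom C f \<longrightarrow> s (Comp C f g) = F1 g (s f)"
    and x: "x \<in> F0 X" "\<forall>f\<in>S. F1 f x = s f"
    and y: "y \<in> F0 X" "\<forall>f\<in>S. F1 f y = s f"
  shows "x = y"
proof -
  have "\<exists>!x. x \<in> F0 X \<and> (\<forall>f\<in>S. F1 f x = s f)" using sh S sv mt unfolding is_sheaf_def by blast
  then show ?thesis using x y by blast
qed

lemma sheaf_exists:
  assumes sh: "is_sheaf C J F0 F1" and S: "S \<in> J X"
    and sv: "\<forall>f\<in>S. s f \<in> F0 (Dom C f)"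
    and mt: "\<forall>f\<in>S. \<forall>g\<in>Arr C. Cod C g = Dom C f \<longrightarrow> s (Comp C f g) = F1 g (s f)"
  shows "\<exists>x. x \<in> F0 X \<and> (\<forall>f\<in>S. F1 f x = s f)"
proof -
  have "\<exists>!x. x \<in> F0 X \<and> (\<forall>f\<in>S. F1 f x = s f)" using sh S sv mt unfolding is_sheaf_def by blast
  then show ?thesis by blast
qed

context two_sites
begin

lemma cont_imp_cover:
  assumes e: "inj (e :: 'n set \<Rightarrow> 'v)"
    and cont: "continuous_site TYPE('v) C JC D JD uo um" and Q: "Q \<in> PC"
  shows "covering_family D JD (uo (sq11 C Q)) {um (sq_b Q), um (sq_d Q)}"
proof -
  define G0 where "G0 = (\<lambda>Z. e ` {T. closed_sieve D JD Z T})"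
  define G1 where "G1 = (\<lambda>h y. e (pb_sieve D h (inv e y)))"
  have shD: "is_sheaf D JD G0 G1" unfolding G0_def G1_def by (rule D.omega_sheaf[OF e])
  have shC: "is_sheaf C JC (G0 \<circ> uo) (G1 \<circ> um)" using cont shD unfolding continuous_site_def by blast
  note sq = C.sq_facts[OF Q]
  define X where "X = sq11 C Q"
  define b where "b = sq_b Q"
  define d where "d = sq_d Q"
  have bd: "b \<in> Arr C" "d \<in> Arr C" "Cod C b = X" "Cod C d = X" using sq unfolding X_def b_def d_def by auto
  have XO: "X \<in> Obj C" using bd C.cod_obj by metis
  have uXO: "uo X \<in> Obj D" using XO by simp
  define S where "S = sieve_gen C {b, d}"
  have SJ: "S \<in> JC X" unfolding S_def X_def b_def d_def using C.gens[OF Q] .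
  have Ssv: "is_sieve C X S" using C.J_sieve[OF SJ] .
  define S' where "S' = sieve_gen D {um b, um d}"
  have ubd: "{um b, um d} \<subseteq> Arr D" "\<forall>f\<in>{um b, um d}. Cod D f = uo X" using bd by auto
  have S'sv: "is_sieve D (uo X) S'" unfolding S'_def using D.sieve_gen_sieve[OF ubd] .
  define cl where "cl = {h \<in> Arr D. Cod D h = uo X \<and> pb_sieve D h S' \<in> JD (Dom D h)}"
  define M where "M = max_sieve D (uo X)"
  have clc: "closed_sieve D JD (uo X) cl" unfolding cl_def using D.closure_closed[OF S'sv] .
  have Mc: "closed_sieve D JD (uo X) M" unfolding M_def using D.closed_max .
  have clsv: "is_sieve D (uo X) cl" using clc unfolding closed_sieve_def by blast
  have Msv: "is_sieve D (uo X) M" using Mc unfolding closed_sieve_def by blast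
  define s where "s = (\<lambda>f. e (max_sieve D (uo (Dom C f))))"
  have pbmax: "\<And>h Y. h \<in> Arr D \<Longrightarrow> Cod D h = Y \<Longrightarrow> pb_sieve D h (max_sieve D Y) = max_sieve D (Dom D h)"
  proof -
    fix h Y assume h: "h \<in> Arr D" "Cod D h = Y"
    then have "h \<in> max_sieve D Y" unfolding max_sieve_def by simp
    then show "pb_sieve D h (max_sieve D Y) = max_sieve D (Dom D h)" using D.pb_sieve_max[OF D.max_sieve_sieve] by simp
  qed
  have fS: "\<And>f. f \<in> S \<Longrightarrow> f \<in> Arr C \<and> Cod C f = X" using C.sieveD[OF Ssv] by blast
  have ufcl: "\<And>f. f \<in> S \<Longrightarrow> um f \<in> cl"
  proof -
    fix f assume f: "f \<in> S"
    then obtain f' g where fg: "f' \<in> {b, d}" "g \<in> Arr C" "Cod C g = Dom C f'" "f = Comp C f' g"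
      unfolding S_def by (rule C.sieve_gen_E)
    have f'A: "f' \<in> Arr C" using fg(1) bd by blast
    have "um f = Comp D (um f') (um g)" using fcomp[OF fg(2) f'A fg(3)] fg(4) by simp
    moreover have "Comp D (um f') (um g) \<in> S'" unfolding S'_def
      using D.in_sieve_gen[of "um f'" "{um b, um d}" "um g"] fg f'A by auto
    ultimately have "um f \<in> S'" by simp
    then have "pb_sieve D (um f) S' = max_sieve D (Dom D (um f))" using D.pb_sieve_max[OF S'sv] by simp
    moreover have "Dom D (um f) \<in> Obj D" using fS[OF f] by simp
    ultimately have "pb_sieve D (um f) S' \<in> JD (Dom D (um f))" using D.J_max by simp
    then show "um f \<in> cl" unfolding cl_def using fS[OF f] by simp
  qed
  have prop_cl: "\<forall>f\<in>S. (G1 \<circ> um) f (e cl) = s f"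
  proof
    fix f assume f: "f \<in> S"
    have "pb_sieve D (um f) cl = max_sieve D (Dom D (um f))" using D.pb_sieve_max[OF clsv ufcl[OF f]] .
    then show "(G1 \<circ> um) f (e cl) = s f" unfolding G1_def s_def using e fS[OF f] by simp
  qed
  have prop_M: "\<forall>f\<in>S. (G1 \<circ> um) f (e M) = s f"
  proof
    fix f assume f: "f \<in> S"
    have "pb_sieve D (um f) M = max_sieve D (Dom D (um f))" unfolding M_def using pbmax fS[OF f] by simp
    then show "(G1 \<circ> um) f (e M) = s f" unfolding G1_def s_def using e fS[OF f] by simp
  qed
  have sv: "\<forall>f\<in>S. s f \<in> (G0 \<circ> uo) (Dom C f)"
    unfolding s_def G0_def using D.closed_max by simp
  have mt: "\<forall>f\<in>S. \<forall>g\<in>Arr C. Cod C g = Dom C f \<longrightarrow> s (Comp C f g) = (G1 \<circ> um) g (s f)"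
  proof (intro ballI impI)
    fix f g assume f: "f \<in> S" and g: "g \<in> Arr C" "Cod C g = Dom C f"
    have "pb_sieve D (um g) (max_sieve D (uo (Dom C f))) = max_sieve D (Dom D (um g))"
      using pbmax g by simp
    then show "s (Comp C f g) = (G1 \<circ> um) g (s f)" unfolding s_def G1_def using e g fS[OF f] by simp
  qed
  have "e cl = e M"
    by (rule sheaf_unique[OF shC SJ sv mt, of "e cl" "e M"])
       (use prop_cl prop_M clc Mc in \<open>auto simp: G0_def\<close>)
  then have "cl = M" using e by (simp add: inj_eq)
  moreover have "Idm D (uo X) \<in> M" unfolding M_def max_sieve_def using uXO by simp
  ultimately have "Idm D (uo X) \<in> cl" by simp
  then have "pb_sieve D (Idm D (uo X)) S' \<in> JD (uo X)" unfolding cl_def using uXO by simp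
  then have "S' \<in> JD (uo X)" using D.pb_sieve_id[OF S'sv uXO] by simp
  then show ?thesis unfolding covering_family_def S'_def X_def b_def d_def using ubd
    unfolding X_def b_def d_def by blast
qed

end

locale cont_ctx = two_sites C D uo um JC PC JD PD
  for C :: "('o,'m) cat" and D :: "('p,'n) cat" and uo um JC PC JD PD +
  fixes G0 :: "'p \<Rightarrow> 'v set" and G1 :: "'n \<Rightarrow> 'v \<Rightarrow> 'v"
  assumes shG: "is_sheaf D JD G0 G1"
    and covs: "\<forall>Q\<in>PC. covering_family D JD (uo (sq11 C Q)) {um (sq_b Q), um (sq_d Q)}"
    and compC: "\<And>X S. S \<in> JC X \<Longrightarrow> \<exists>R. simple_cover C PC X R \<and> sieve_gen C R \<subseteq> S"
    and pbs: "preserves_cover_pullbacks C JC D um"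
begin

lemma Gpre: "is_presheaf D G0 G1" using shG unfolding is_sheaf_def by blast
lemma Gmap: "h \<in> Arr D \<Longrightarrow> x \<in> G0 (Cod D h) \<Longrightarrow> G1 h x \<in> G0 (Dom D h)"
  using Gpre unfolding is_presheaf_def by blast
lemma Gid: "Y \<in> Obj D \<Longrightarrow> x \<in> G0 Y \<Longrightarrow> G1 (Idm D Y) x = x"
  using Gpre unfolding is_presheaf_def by blast
lemma Gcomp: "f \<in> Arr D \<Longrightarrow> g \<in> Arr D \<Longrightarrow> Cod D f = Dom D g \<Longrightarrow> x \<in> G0 (Cod D g) \<Longrightarrow>
    G1 (Comp D g f) x = G1 f (G1 g x)"
  using Gpre unfolding is_presheaf_def by blast

lemma Fmap: "f \<in> Arr C \<Longrightarrow> x \<in> G0 (uo (Cod C f)) \<Longrightarrow> G1 (um f) x \<in> G0 (uo (Dom C f))"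
  using Gmap[of "um f" x] by simp
lemma Fcomp: "f \<in> Arr C \<Longrightarrow> g \<in> Arr C \<Longrightarrow> Cod C f = Dom C g \<Longrightarrow> x \<in> G0 (uo (Cod C g)) \<Longrightarrow>
    G1 (um (Comp C g f)) x = G1 (um f) (G1 (um g) x)"
  using Gcomp[of "um f" "um g" x] fcomp[of f g] by simp

lemma G_unique:
  assumes S: "S \<in> JD Y" and x: "x \<in> G0 Y" and y: "y \<in> G0 Y" and eq: "\<And>k. k \<in> S \<Longrightarrow> G1 k x = G1 k y"
  shows "x = y"
proof -
  have Ssv: "is_sieve D Y S" using D.J_sieve[OF S] .
  have kS: "\<And>k. k \<in> S \<Longrightarrow> k \<in> Arr D \<and> Cod D k = Y" using D.sieveD[OF Ssv] by blast
  show ?thesis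
  proof (rule sheaf_unique[OF shG S, of "\<lambda>k. G1 k x"])
    show "\<forall>f\<in>S. G1 f x \<in> G0 (Dom D f)"
    proof
      fix f assume "f \<in> S"
      then have "f \<in> Arr D" "Cod D f = Y" using kS by auto
      then show "G1 f x \<in> G0 (Dom D f)" using Gmap[of f x] x by simp
    qed
    show "\<forall>f\<in>S. \<forall>g\<in>Arr D. Cod D g = Dom D f \<longrightarrow> G1 (Comp D f g) x = G1 g (G1 f x)"
    proof (intro ballI impI)
      fix f g assume "f \<in> S" "g \<in> Arr D" "Cod D g = Dom D f"
      moreover have "f \<in> Arr D" "Cod D f = Y" using kS \<open>f \<in> S\<close> by auto
      ultimately show "G1 (Comp D f g) x = G1 g (G1 f x)" using Gcomp[of g f x] x by simp
    qed
    show "x \<in> G0 Y" "\<forall>f\<in>S. G1 f x = G1 f x" "y \<in> G0 Y" "\<forall>f\<in>S. G1 f y = G1 f x" using x y eq by auto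
  qed
qed

lemma unique_simple:
  "simple_cover C PC Y R \<Longrightarrow> \<forall>x y. x \<in> G0 (uo Y) \<longrightarrow> y \<in> G0 (uo Y) \<longrightarrow>
     (\<forall>f\<in>R. G1 (um f) x = G1 (um f) y) \<longrightarrow> x = y"
proof (induction rule: simple_cover.induct)
  case (iso f)
  show ?case
  proof (intro allI impI)
    fix x y assume x: "x \<in> G0 (uo (Cod C f))" and y: "y \<in> G0 (uo (Cod C f))"
      and eq: "\<forall>f'\<in>{f}. G1 (um f') x = G1 (um f') y"
    have f: "f \<in> Arr C" using iso unfolding is_iso_def by blast
    obtain g where g: "g \<in> Arr C" "Dom C g = Cod C f" "Cod C g = Dom C f"
      "Comp C g f = Idm C (Dom C f)" "Comp C f g = Idm C (Cod C f)" using C.iso_inv[OF iso] by blast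
    have cO: "Cod C f \<in> Obj C" using f by simp
    have "\<And>z. z \<in> G0 (uo (Cod C f)) \<Longrightarrow> G1 (um g) (G1 (um f) z) = z"
    proof -
      fix z assume z: "z \<in> G0 (uo (Cod C f))"
      have "G1 (um g) (G1 (um f) z) = G1 (um (Comp C f g)) z" using Fcomp[OF g(1) f g(3) z] by simp
      also have "\<dots> = z" using g(5) cO z Gid[of "uo (Cod C f)" z] by simp
      finally show "G1 (um g) (G1 (um f) z) = z" .
    qed
    note inv = this
    have "G1 (um f) x = G1 (um f) y" using eq by simp
    then have "G1 (um g) (G1 (um f) x) = G1 (um g) (G1 (um f) y)" by simp
    then show "x = y" using inv[OF x] inv[OF y] by simp
  qed
next
  case (step Q R1 R2)
  note sq = C.sq_facts[OF step.hyps(1)]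
  have sc1: "R1 \<subseteq> Arr C" "\<forall>f\<in>R1. Cod C f = sq01 C Q" using C.simple_cover_covers[OF step.hyps(2)] by blast+
  have sc2: "R2 \<subseteq> Arr C" "\<forall>f\<in>R2. Cod C f = sq10 C Q" using C.simple_cover_covers[OF step.hyps(3)] by blast+
  show ?case
  proof (intro allI impI)
    fix x y assume x: "x \<in> G0 (uo (sq11 C Q))" and y: "y \<in> G0 (uo (sq11 C Q))"
      and eq: "\<forall>f\<in>(\<lambda>y. Comp C (sq_b Q) y) ` R1 \<union> (\<lambda>t. Comp C (sq_d Q) t) ` R2. G1 (um f) x = G1 (um f) y"
    have xb: "G1 (um (sq_b Q)) x \<in> G0 (uo (sq01 C Q))" "G1 (um (sq_b Q)) y \<in> G0 (uo (sq01 C Q))"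
      using Fmap[OF sq(1)] x y sq by auto
    have xd: "G1 (um (sq_d Q)) x \<in> G0 (uo (sq10 C Q))" "G1 (um (sq_d Q)) y \<in> G0 (uo (sq10 C Q))"
      using Fmap[OF sq(2)] x y sq by auto
    have "\<forall>r\<in>R1. G1 (um r) (G1 (um (sq_b Q)) x) = G1 (um r) (G1 (um (sq_b Q)) y)"
    proof
      fix r assume r: "r \<in> R1"
      have rA: "r \<in> Arr C" "Cod C r = Dom C (sq_b Q)" using sc1 r sq by auto
      have "G1 (um r) (G1 (um (sq_b Q)) x) = G1 (um (Comp C (sq_b Q) r)) x" using Fcomp[OF rA(1) sq(1) rA(2)] x sq by simp
      also have "\<dots> = G1 (um (Comp C (sq_b Q) r)) y" using eq r by blast
      also have "\<dots> = G1 (um r) (G1 (um (sq_b Q)) y)" using Fcomp[OF rA(1) sq(1) rA(2)] y sq by simp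
      finally show "G1 (um r) (G1 (um (sq_b Q)) x) = G1 (um r) (G1 (um (sq_b Q)) y)" .
    qed
    then have eb: "G1 (um (sq_b Q)) x = G1 (um (sq_b Q)) y" using step.IH(1) xb by blast
    have "\<forall>r\<in>R2. G1 (um r) (G1 (um (sq_d Q)) x) = G1 (um r) (G1 (um (sq_d Q)) y)"
    proof
      fix r assume r: "r \<in> R2"
      have rA: "r \<in> Arr C" "Cod C r = Dom C (sq_d Q)" using sc2 r sq by auto
      have "G1 (um r) (G1 (um (sq_d Q)) x) = G1 (um (Comp C (sq_d Q) r)) x" using Fcomp[OF rA(1) sq(2) rA(2)] x sq by simp
      also have "\<dots> = G1 (um (Comp C (sq_d Q) r)) y" using eq r by blast
      also have "\<dots> = G1 (um r) (G1 (um (sq_d Q)) y)" using Fcomp[OF rA(1) sq(2) rA(2)] y sq by simp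
      finally show "G1 (um r) (G1 (um (sq_d Q)) x) = G1 (um r) (G1 (um (sq_d Q)) y)" .
    qed
    then have ed: "G1 (um (sq_d Q)) x = G1 (um (sq_d Q)) y" using step.IH(2) xd by blast
    have TJ: "sieve_gen D {um (sq_b Q), um (sq_d Q)} \<in> JD (uo (sq11 C Q))"
      using covs step.hyps(1) unfolding covering_family_def by blast
    show "x = y"
    proof (rule G_unique[OF TJ x y])
      fix k assume "k \<in> sieve_gen D {um (sq_b Q), um (sq_d Q)}"
      then obtain f0 h where fh: "f0 \<in> {um (sq_b Q), um (sq_d Q)}" "h \<in> Arr D" "Cod D h = Dom D f0" "k = Comp D f0 h"
        by (rule D.sieve_gen_E)
      have f0: "f0 \<in> Arr D" "Cod D f0 = uo (sq11 C Q)" using fh(1) sq by auto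
      have "G1 k x = G1 h (G1 f0 x)" using Gcomp[OF fh(2) f0(1) fh(3)] x f0 fh(4) by simp
      also have "\<dots> = G1 h (G1 f0 y)" using fh(1) eb ed by auto
      also have "\<dots> = G1 k y" using Gcomp[OF fh(2) f0(1) fh(3)] y f0 fh(4) by simp
      finally show "G1 k x = G1 k y" .
    qed
  qed
qed

lemma separated:
  assumes S: "S \<in> JC Y" and x: "x \<in> G0 (uo Y)" and y: "y \<in> G0 (uo Y)"
    and eq: "\<And>f. f \<in> S \<Longrightarrow> G1 (um f) x = G1 (um f) y"
  shows "x = y"
proof -
  obtain R where R: "simple_cover C PC Y R" "sieve_gen C R \<subseteq> S" using compC[OF S] by blast
  have RA: "R \<subseteq> Arr C" using C.simple_cover_covers[OF R(1)] by blast
  have "\<forall>f\<in>R. G1 (um f) x = G1 (um f) y"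
  proof
    fix f assume f: "f \<in> R"
    have "f \<in> S" using C.in_sieve_gen_self[OF f] RA f R(2) by blast
    then show "G1 (um f) x = G1 (um f) y" using eq by blast
  qed
  then show ?thesis using unique_simple[OF R(1)] x y by blast
qed

end

context cont_ctx
begin

definition glues where
  "glues S s f x \<longleftrightarrow> x \<in> G0 (uo (Dom C f)) \<and>
     (\<forall>k\<in>Arr C. Cod C k = Dom C f \<and> Comp C f k \<in> S \<longrightarrow> G1 (um k) x = s (Comp C f k))"

lemma side_glue:
  assumes Ssv: "is_sieve C X S"
   and sv: "\<forall>f\<in>S. s f \<in> G0 (uo (Dom C f))"
   and mt: "\<forall>f\<in>S. \<forall>g\<in>Arr C. Cod C g = Dom C f \<longrightarrow> s (Comp C f g) = G1 (um g) (s f)"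
   and f: "f \<in> Arr C" "Cod C f = X"
   and Rf: "simple_cover C PC (Dom C f) Rf" "\<forall>r\<in>Rf. Comp C f r \<in> S"
   and IH: "\<forall>s. (\<forall>k\<in>sieve_gen C Rf. s k \<in> G0 (uo (Dom C k))) \<and>
      (\<forall>k\<in>sieve_gen C Rf. \<forall>g\<in>Arr C. Cod C g = Dom C k \<longrightarrow> s (Comp C k g) = G1 (um g) (s k)) \<longrightarrow>
      (\<exists>x\<in>G0 (uo (Dom C f)). \<forall>k\<in>sieve_gen C Rf. G1 (um k) x = s k)"
  shows "\<exists>x. glues S s f x"
proof -
  have Rc: "Rf \<subseteq> Arr C" "\<forall>r\<in>Rf. Cod C r = Dom C f" "sieve_gen C Rf \<in> JC (Dom C f)"
    using C.simple_cover_covers[OF Rf(1)] by blast+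
  have Rsv: "is_sieve C (Dom C f) (sieve_gen C Rf)" using C.J_sieve[OF Rc(3)] .
  have kA: "\<And>k. k \<in> sieve_gen C Rf \<Longrightarrow> k \<in> Arr C \<and> Cod C k = Dom C f" using C.sieveD[OF Rsv] by blast
  have inS: "\<And>k. k \<in> sieve_gen C Rf \<Longrightarrow> Comp C f k \<in> S"
  proof -
    fix k assume "k \<in> sieve_gen C Rf"
    then obtain r n where rn: "r \<in> Rf" "n \<in> Arr C" "Cod C n = Dom C r" "k = Comp C r n" by (rule C.sieve_gen_E)
    have r: "r \<in> Arr C" "Cod C r = Dom C f" using Rc rn by auto
    have "Comp C f k = Comp C (Comp C f r) n" using C.assoc[OF rn(2) r(1) f(1) rn(3) r(2)] rn(4) by simp
    moreover have "Comp C (Comp C f r) n \<in> S" using C.sieve_comp[OF Ssv, of "Comp C f r" n] Rf(2) rn r f by simp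
    ultimately show "Comp C f k \<in> S" by simp
  qed
  define t where "t = (\<lambda>k. s (Comp C f k))"
  have tv: "\<forall>k\<in>sieve_gen C Rf. t k \<in> G0 (uo (Dom C k))"
  proof
    fix k assume k: "k \<in> sieve_gen C Rf"
    have "s (Comp C f k) \<in> G0 (uo (Dom C (Comp C f k)))" using sv inS[OF k] by blast
    then show "t k \<in> G0 (uo (Dom C k))" unfolding t_def using kA[OF k] f by simp
  qed
  have tm: "\<forall>k\<in>sieve_gen C Rf. \<forall>g\<in>Arr C. Cod C g = Dom C k \<longrightarrow> t (Comp C k g) = G1 (um g) (t k)"
  proof (intro ballI impI)
    fix k g assume k: "k \<in> sieve_gen C Rf" and g: "g \<in> Arr C" "Cod C g = Dom C k"
    have k': "k \<in> Arr C" "Cod C k = Dom C f" using kA[OF k] by auto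
    have "Comp C f (Comp C k g) = Comp C (Comp C f k) g" using C.assoc[OF g(1) k'(1) f(1) g(2) k'(2)] .
    moreover have "Cod C g = Dom C (Comp C f k)" using g k' f by simp
    ultimately show "t (Comp C k g) = G1 (um g) (t k)" unfolding t_def using mt inS[OF k] g by simp
  qed
  obtain x where x: "x \<in> G0 (uo (Dom C f))" "\<forall>k\<in>sieve_gen C Rf. G1 (um k) x = t k"
    using IH tv tm by blast
  have "glues S s f x" unfolding glues_def
  proof (intro conjI ballI impI x(1))
    fix k assume k: "k \<in> Arr C" "Cod C k = Dom C f \<and> Comp C f k \<in> S"
    have kc: "Cod C k = Dom C f" "Comp C f k \<in> S" using k by auto
    have pbJ: "pb_sieve C k (sieve_gen C Rf) \<in> JC (Dom C k)" using C.J_pb[OF Rc(3) k(1) kc(1)] .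
    have x1: "G1 (um k) x \<in> G0 (uo (Dom C k))" using Fmap[OF k(1)] x(1) kc by simp
    have x2: "s (Comp C f k) \<in> G0 (uo (Dom C k))" using sv kc(2) k(1) f kc(1) by force
    show "G1 (um k) x = s (Comp C f k)"
    proof (rule separated[OF pbJ x1 x2])
      fix g assume "g \<in> pb_sieve C k (sieve_gen C Rf)"
      then have g: "g \<in> Arr C" "Cod C g = Dom C k" "Comp C k g \<in> sieve_gen C Rf" unfolding pb_sieve_def by auto
      have "G1 (um g) (G1 (um k) x) = G1 (um (Comp C k g)) x" using Fcomp[OF g(1) k(1) g(2)] x(1) kc by simp
      also have "\<dots> = s (Comp C f (Comp C k g))" using x(2) g(3) unfolding t_def by blast
      also have "\<dots> = s (Comp C (Comp C f k) g)" using C.assoc[OF g(1) k(1) f(1) g(2) kc(1)] by simp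
      also have "\<dots> = G1 (um g) (s (Comp C f k))" using mt kc(2) g k f by simp
      finally show "G1 (um g) (G1 (um k) x) = G1 (um g) (s (Comp C f k))" .
    qed
  qed
  then show ?thesis by blast
qed

lemma pullbackD:
  assumes "is_pullback C p1 p2 f g"
  shows "p1 \<in> Arr C" "p2 \<in> Arr C" "Cod C p1 = Dom C f" "Cod C p2 = Dom C g" "Dom C p1 = Dom C p2"
    "Comp C f p1 = Comp C g p2"
  using assms unfolding is_pullback_def by auto

lemma compat:
  assumes SJ: "S \<in> JC X" and Ssv: "is_sieve C X S"
   and mt: "\<forall>f\<in>S. \<forall>g\<in>Arr C. Cod C g = Dom C f \<longrightarrow> s (Comp C f g) = G1 (um g) (s f)"
   and f: "f \<in> Arr C" "Cod C f = X" and f': "f' \<in> Arr C" "Cod C f' = X"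
   and xf: "glues S s f xf" and xf': "glues S s f' xf'"
   and pbex: "\<exists>p1 p2. is_pullback C p1 p2 f f'"
   and pbpres: "\<forall>p1 p2. is_pullback C p1 p2 f f' \<longrightarrow> is_pullback D (um p1) (um p2) (um f) (um f')"
   and h: "h \<in> Arr D" "Cod D h = Dom D (um f)" and h': "h' \<in> Arr D" "Cod D h' = Dom D (um f')"
   and hh: "Dom D h = Dom D h'" "Comp D (um f) h = Comp D (um f') h'"
  shows "G1 h xf = G1 h' xf'"
proof -
  obtain p1 p2 where pb: "is_pullback C p1 p2 f f'" using pbex by blast
  note p = pullbackD[OF pb]
  have xfG: "xf \<in> G0 (uo (Dom C f))" using xf unfolding glues_def by blast
  have xf'G: "xf' \<in> G0 (uo (Dom C f'))" using xf' unfolding glues_def by blast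
  have fp: "Comp C f p1 \<in> Arr C" "Cod C (Comp C f p1) = X" "Dom C (Comp C f p1) = Dom C p1" using p(1,3) f by auto
  have pbJ: "pb_sieve C (Comp C f p1) S \<in> JC (Dom C p1)" using C.J_pb[OF SJ fp(1,2)] fp(3) by simp
  have a1: "G1 (um p1) xf \<in> G0 (uo (Dom C p1))" using Fmap[OF p(1)] xfG p by simp
  have a2: "G1 (um p2) xf' \<in> G0 (uo (Dom C p1))" using Fmap[OF p(2)] xf'G p by simp
  have B: "G1 (um p1) xf = G1 (um p2) xf'"
  proof (rule separated[OF pbJ a1 a2])
    fix g assume "g \<in> pb_sieve C (Comp C f p1) S"
    then have g: "g \<in> Arr C" "Cod C g = Dom C p1" "Comp C (Comp C f p1) g \<in> S" unfolding pb_sieve_def using fp by auto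
    have g2: "Cod C g = Dom C p2" using g p by simp
    have e1: "Comp C f (Comp C p1 g) = Comp C (Comp C f p1) g" using C.assoc[OF g(1) p(1) f(1) g(2) p(3)] .
    have e2: "Comp C f' (Comp C p2 g) = Comp C (Comp C f p1) g" using C.assoc[OF g(1) p(2) f'(1) g2 p(4)] p(6) by simp
    have c1: "Comp C p1 g \<in> Arr C" "Cod C (Comp C p1 g) = Dom C f" using g p by auto
    have c2: "Comp C p2 g \<in> Arr C" "Cod C (Comp C p2 g) = Dom C f'" using g2 g p by auto
    have "G1 (um g) (G1 (um p1) xf) = G1 (um (Comp C p1 g)) xf" using Fcomp[OF g(1) p(1) g(2)] xfG p by simp
    also have "\<dots> = s (Comp C f (Comp C p1 g))" using xf c1 e1 g(3) unfolding glues_def by simp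
    also have "\<dots> = s (Comp C f' (Comp C p2 g))" using e1 e2 by simp
    also have "\<dots> = G1 (um (Comp C p2 g)) xf'" using xf' c2 e2 g(3) unfolding glues_def by simp
    also have "\<dots> = G1 (um g) (G1 (um p2) xf')" using Fcomp[OF g(1) p(2) g2] xf'G p by simp
    finally show "G1 (um g) (G1 (um p1) xf) = G1 (um g) (G1 (um p2) xf')" .
  qed
  have pbD: "is_pullback D (um p1) (um p2) (um f) (um f')" using pbpres pb by blast
  have "\<exists>!m. m \<in> Arr D \<and> Dom D m = Dom D h \<and> Cod D m = Dom D (um p1) \<and>
          Comp D (um p1) m = h \<and> Comp D (um p2) m = h'"
    using pbD h h' hh unfolding is_pullback_def by blast
  then obtain m where m: "m \<in> Arr D" "Cod D m = Dom D (um p1)" "Comp D (um p1) m = h" "Comp D (um p2) m = h'"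
    by blast
  have m2: "Cod D m = Dom D (um p2)" using m(2) p by simp
  have "G1 h xf = G1 m (G1 (um p1) xf)" using Gcomp[OF m(1) _ m(2), of xf] m(3) p(1) xfG p(3) by simp
  also have "\<dots> = G1 m (G1 (um p2) xf')" using B by simp
  also have "\<dots> = G1 h' xf'" using Gcomp[OF m(1) _ m2, of xf'] m(4) p(2) xf'G p(4) by simp
  finally show ?thesis .
qed

end

context cont_ctx
begin

lemma exist_simple:
  "simple_cover C PC Y R \<Longrightarrow> \<forall>s. (\<forall>k\<in>sieve_gen C R. s k \<in> G0 (uo (Dom C k))) \<and>
      (\<forall>k\<in>sieve_gen C R. \<forall>g\<in>Arr C. Cod C g = Dom C k \<longrightarrow> s (Comp C k g) = G1 (um g) (s k)) \<longrightarrow>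
      (\<exists>x\<in>G0 (uo Y). \<forall>k\<in>sieve_gen C R. G1 (um k) x = s k)"
proof (induction rule: simple_cover.induct)
  case (iso f)
  show ?case
  proof (intro allI impI)
    fix s assume a: "(\<forall>k\<in>sieve_gen C {f}. s k \<in> G0 (uo (Dom C k))) \<and>
      (\<forall>k\<in>sieve_gen C {f}. \<forall>g\<in>Arr C. Cod C g = Dom C k \<longrightarrow> s (Comp C k g) = G1 (um g) (s k))"
    have f: "f \<in> Arr C" using iso unfolding is_iso_def by blast
    have cO: "Cod C f \<in> Obj C" using f by simp
    have S: "sieve_gen C {f} = max_sieve C (Cod C f)" using C.iso_sieve_gen[OF iso] .
    have I: "Idm C (Cod C f) \<in> sieve_gen C {f}" unfolding S max_sieve_def using cO by simp
    have xv: "s (Idm C (Cod C f)) \<in> G0 (uo (Cod C f))" using a I cO by force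
    have "\<forall>k\<in>sieve_gen C {f}. G1 (um k) (s (Idm C (Cod C f))) = s k"
    proof
      fix k assume "k \<in> sieve_gen C {f}"
      then have k: "k \<in> Arr C" "Cod C k = Cod C f" unfolding S max_sieve_def by auto
      have "s (Comp C (Idm C (Cod C f)) k) = G1 (um k) (s (Idm C (Cod C f)))" using a I k cO by simp
      moreover have "Comp C (Idm C (Cod C f)) k = k" using C.id_left[OF k(1)] k(2) by simp
      ultimately show "G1 (um k) (s (Idm C (Cod C f))) = s k" by simp
    qed
    then show "\<exists>x\<in>G0 (uo (Cod C f)). \<forall>k\<in>sieve_gen C {f}. G1 (um k) x = s k" using xv by blast
  qed
next
  case (step Q R1 R2)
  note sq = C.sq_facts[OF step.hyps(1)]
  define b where "b = sq_b Q"
  define d where "d = sq_d Q"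
  define X where "X = sq11 C Q"
  define R where "R = (\<lambda>y. Comp C (sq_b Q) y) ` R1 \<union> (\<lambda>t. Comp C (sq_d Q) t) ` R2"
  have bd: "b \<in> Arr C" "d \<in> Arr C" "Cod C b = X" "Cod C d = X" using sq unfolding b_def d_def X_def by auto
  have scR: "simple_cover C PC X R" unfolding X_def R_def using simple_cover.step[OF step.hyps] .
  have Rc: "R \<subseteq> Arr C" "\<forall>f\<in>R. Cod C f = X" "sieve_gen C R \<in> JC X" using C.simple_cover_covers[OF scR] by blast+
  have sc1: "R1 \<subseteq> Arr C" "\<forall>f\<in>R1. Cod C f = sq01 C Q" using C.simple_cover_covers[OF step.hyps(2)] by blast+
  have sc2: "R2 \<subseteq> Arr C" "\<forall>f\<in>R2. Cod C f = sq10 C Q" using C.simple_cover_covers[OF step.hyps(3)] by blast+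
  define S where "S = sieve_gen C R"
  have SJ: "S \<in> JC X" unfolding S_def using Rc(3) .
  have Ssv: "is_sieve C X S" using C.J_sieve[OF SJ] .
  have Rform: "\<And>r0. r0 \<in> R \<Longrightarrow> \<exists>f\<in>{b, d}. \<exists>r\<in>Arr C. Cod C r = Dom C f \<and> r0 = Comp C f r"
  proof -
    fix r0 assume "r0 \<in> R"
    then consider (b) r where "r \<in> R1" "r0 = Comp C b r" | (d) r where "r \<in> R2" "r0 = Comp C d r"
      unfolding R_def b_def d_def by blast
    then show "\<exists>f\<in>{b, d}. \<exists>r\<in>Arr C. Cod C r = Dom C f \<and> r0 = Comp C f r"
    proof cases
      case b
      have r: "r \<in> Arr C" "Cod C r = Dom C b" using sc1 b(1) sq unfolding b_def by auto
      show ?thesis using r b(2) by blast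
    next
      case d
      have r: "r \<in> Arr C" "Cod C r = Dom C d" using sc2 d(1) sq unfolding d_def by auto
      show ?thesis using r d(2) by blast
    qed
  qed
  have Req: "(\<lambda>y. Comp C (sq_b Q) y) ` R1 \<union> (\<lambda>t. Comp C (sq_d Q) t) ` R2 = R" unfolding R_def by simp
  show ?case unfolding Req
  proof (intro allI impI)
    fix s assume a: "(\<forall>k\<in>sieve_gen C R. s k \<in> G0 (uo (Dom C k))) \<and>
      (\<forall>k\<in>sieve_gen C R. \<forall>g\<in>Arr C. Cod C g = Dom C k \<longrightarrow> s (Comp C k g) = G1 (um g) (s k))"
    have sv: "\<forall>f\<in>S. s f \<in> G0 (uo (Dom C f))" using a unfolding S_def by blast
    have mt: "\<forall>f\<in>S. \<forall>g\<in>Arr C. Cod C g = Dom C f \<longrightarrow> s (Comp C f g) = G1 (um g) (s f)"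
      using a unfolding S_def by blast
    have gb: "\<exists>x. glues S s b x"
    proof (rule side_glue[OF Ssv sv mt bd(1) bd(3)])
      show "simple_cover C PC (Dom C b) R1" using step.hyps(2) sq(3) unfolding b_def by simp
      show "\<forall>r\<in>R1. Comp C b r \<in> S"
      proof
        fix r assume r: "r \<in> R1"
        have "Comp C b r \<in> R" unfolding R_def b_def using r by blast
        moreover have "Comp C b r \<in> Arr C" using bd sc1 r sq unfolding b_def by auto
        ultimately show "Comp C b r \<in> S" unfolding S_def using C.in_sieve_gen_self by blast
      qed
      show "\<forall>s. (\<forall>k\<in>sieve_gen C R1. s k \<in> G0 (uo (Dom C k))) \<and>
        (\<forall>k\<in>sieve_gen C R1. \<forall>g\<in>Arr C. Cod C g = Dom C k \<longrightarrow> s (Comp C k g) = G1 (um g) (s k)) \<longrightarrow>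
        (\<exists>x\<in>G0 (uo (Dom C b)). \<forall>k\<in>sieve_gen C R1. G1 (um k) x = s k)"
        using step.IH(1) sq(3) unfolding b_def by simp
    qed
    have gd: "\<exists>x. glues S s d x"
    proof (rule side_glue[OF Ssv sv mt bd(2) bd(4)])
      show "simple_cover C PC (Dom C d) R2" using step.hyps(3) sq(4) unfolding d_def by simp
      show "\<forall>r\<in>R2. Comp C d r \<in> S"
      proof
        fix r assume r: "r \<in> R2"
        have "Comp C d r \<in> R" unfolding R_def d_def using r by blast
        moreover have "Comp C d r \<in> Arr C" using bd sc2 r sq unfolding d_def by auto
        ultimately show "Comp C d r \<in> S" unfolding S_def using C.in_sieve_gen_self by blast
      qed
      show "\<forall>s. (\<forall>k\<in>sieve_gen C R2. s k \<in> G0 (uo (Dom C k))) \<and>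
        (\<forall>k\<in>sieve_gen C R2. \<forall>g\<in>Arr C. Cod C g = Dom C k \<longrightarrow> s (Comp C k g) = G1 (um g) (s k)) \<longrightarrow>
        (\<exists>x\<in>G0 (uo (Dom C d)). \<forall>k\<in>sieve_gen C R2. G1 (um k) x = s k)"
        using step.IH(2) sq(4) unfolding d_def by simp
    qed
    define xf where "xf = (\<lambda>f. SOME x. glues S s f x)"
    have gl: "\<And>f. f \<in> {b, d} \<Longrightarrow> glues S s f (xf f)"
    proof -
      fix f assume "f \<in> {b, d}"
      then have "\<exists>x. glues S s f x" using gb gd by blast
      then show "glues S s f (xf f)" unfolding xf_def by (rule someI_ex)
    qed
    have xfG: "\<And>f. f \<in> {b, d} \<Longrightarrow> xf f \<in> G0 (uo (Dom C f))" using gl unfolding glues_def by blast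
    have fA: "\<And>f. f \<in> {b, d} \<Longrightarrow> f \<in> Arr C \<and> Cod C f = X" using bd by blast
    have cf: "covering_family C JC X {b, d}" unfolding covering_family_def
      using bd C.gens[OF step.hyps(1)] unfolding b_def d_def X_def by blast
    have pbinfo: "\<And>f f'. f \<in> {b, d} \<Longrightarrow> f' \<in> {b, d} \<Longrightarrow> (\<exists>p1 p2. is_pullback C p1 p2 f f') \<and>
        (\<forall>p1 p2. is_pullback C p1 p2 f f' \<longrightarrow> is_pullback D (um p1) (um p2) (um f) (um f'))"
    proof -
      fix f f' assume f: "f \<in> {b, d}" and f': "f' \<in> {b, d}"
      have "covering_family C JC X {b, d} \<and> f \<in> {b, d} \<and> f' \<in> Arr C \<and> Cod C f' = X" using cf f f' fA by blast
      then show "(\<exists>p1 p2. is_pullback C p1 p2 f f') \<and>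
        (\<forall>p1 p2. is_pullback C p1 p2 f f' \<longrightarrow> is_pullback D (um p1) (um p2) (um f) (um f'))"
        using pbs unfolding preserves_cover_pullbacks_def by blast
    qed
    have cmp: "\<And>f f' h h'. f \<in> {b, d} \<Longrightarrow> f' \<in> {b, d} \<Longrightarrow> h \<in> Arr D \<Longrightarrow> Cod D h = Dom D (um f) \<Longrightarrow>
        h' \<in> Arr D \<Longrightarrow> Cod D h' = Dom D (um f') \<Longrightarrow> Comp D (um f) h = Comp D (um f') h' \<Longrightarrow>
        G1 h (xf f) = G1 h' (xf f')"
    proof -
      fix f f' h h' assume f: "f \<in> {b, d}" and f': "f' \<in> {b, d}" and h: "h \<in> Arr D" "Cod D h = Dom D (um f)"
        and h': "h' \<in> Arr D" "Cod D h' = Dom D (um f')" and eq: "Comp D (um f) h = Comp D (um f') h'"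
      have ff: "f \<in> Arr C" "Cod C f = X" "f' \<in> Arr C" "Cod C f' = X" using fA f f' by auto
      have "Dom D h = Dom D (Comp D (um f) h)" using h ff by simp
      also have "\<dots> = Dom D (Comp D (um f') h')" using eq by simp
      also have "\<dots> = Dom D h'" using h' ff by simp
      finally have dh: "Dom D h = Dom D h'" .
      note pi = pbinfo[OF f f']
      show "G1 h (xf f) = G1 h' (xf f')"
        using compat[OF SJ Ssv mt ff(1,2) ff(3,4) gl[OF f] gl[OF f'] conjunct1[OF pi] conjunct2[OF pi] h h' dh eq] .
    qed
    define T where "T = sieve_gen D {um b, um d}"
    have TJ: "T \<in> JD (uo X)" unfolding T_def X_def b_def d_def
      using covs step.hyps(1) unfolding covering_family_def by blast
    have Tform: "\<And>k. k \<in> T \<Longrightarrow> \<exists>f\<in>{b, d}. \<exists>h\<in>Arr D. Cod D h = Dom D (um f) \<and> k = Comp D (um f) h"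
    proof -
      fix k assume "k \<in> T"
      then obtain f0 h where fh: "f0 \<in> {um b, um d}" "h \<in> Arr D" "Cod D h = Dom D f0" "k = Comp D f0 h"
        unfolding T_def by (rule D.sieve_gen_E)
      then show "\<exists>f\<in>{b, d}. \<exists>h\<in>Arr D. Cod D h = Dom D (um f) \<and> k = Comp D (um f) h" by blast
    qed
    define t where "t = (\<lambda>k. SOME v. \<exists>f\<in>{b, d}. \<exists>h\<in>Arr D. Cod D h = Dom D (um f) \<and> k = Comp D (um f) h \<and> v = G1 h (xf f))"
    have tval: "\<And>f h. f \<in> {b, d} \<Longrightarrow> h \<in> Arr D \<Longrightarrow> Cod D h = Dom D (um f) \<Longrightarrow> t (Comp D (um f) h) = G1 h (xf f)"
    proof -
      fix f h assume f: "f \<in> {b, d}" and h: "h \<in> Arr D" "Cod D h = Dom D (um f)"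
      let ?P = "\<lambda>v. \<exists>f'\<in>{b, d}. \<exists>h'\<in>Arr D. Cod D h' = Dom D (um f') \<and> Comp D (um f) h = Comp D (um f') h' \<and> v = G1 h' (xf f')"
      have "?P (G1 h (xf f))" using f h by blast
      then have "?P (t (Comp D (um f) h))" unfolding t_def by (rule someI)
      then obtain f' h' where fh': "f' \<in> {b, d}" "h' \<in> Arr D" "Cod D h' = Dom D (um f')"
        "Comp D (um f) h = Comp D (um f') h'" "t (Comp D (um f) h) = G1 h' (xf f')" by blast
      then show "t (Comp D (um f) h) = G1 h (xf f)" using cmp[OF f fh'(1) h fh'(2,3,4)] by simp
    qed
    have tv: "\<forall>k\<in>T. t k \<in> G0 (Dom D k)"
    proof
      fix k assume "k \<in> T"
      then obtain f h where fh: "f \<in> {b, d}" "h \<in> Arr D" "Cod D h = Dom D (um f)" "k = Comp D (um f) h"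
        using Tform by blast
      have ff: "f \<in> Arr C" using fA fh(1) by blast
      have "G1 h (xf f) \<in> G0 (Dom D h)" using Gmap[OF fh(2)] xfG[OF fh(1)] fh(3) ff by simp
      then show "t k \<in> G0 (Dom D k)" using tval[OF fh(1-3)] fh(4) fh(2,3) ff by simp
    qed
    have tm: "\<forall>k\<in>T. \<forall>g\<in>Arr D. Cod D g = Dom D k \<longrightarrow> t (Comp D k g) = G1 g (t k)"
    proof (intro ballI impI)
      fix k g assume k: "k \<in> T" and g: "g \<in> Arr D" "Cod D g = Dom D k"
      obtain f h where fh: "f \<in> {b, d}" "h \<in> Arr D" "Cod D h = Dom D (um f)" "k = Comp D (um f) h"
        using Tform[OF k] by blast
      have ff: "f \<in> Arr C" using fA fh(1) by blast
      have uf: "um f \<in> Arr D" using ff by simp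
      have gh: "Cod D g = Dom D h" using g fh uf by simp
      have "Comp D k g = Comp D (um f) (Comp D h g)" using D.assoc[OF g(1) fh(2) uf gh fh(3)] fh(4) by simp
      moreover have "Comp D h g \<in> Arr D" "Cod D (Comp D h g) = Dom D (um f)" using g fh gh by auto
      ultimately have "t (Comp D k g) = G1 (Comp D h g) (xf f)" using tval[OF fh(1)] by simp
      also have "\<dots> = G1 g (G1 h (xf f))" using Gcomp[OF g(1) fh(2) gh] xfG[OF fh(1)] fh(3) ff by simp
      also have "\<dots> = G1 g (t k)" using tval[OF fh(1-3)] fh(4) by simp
      finally show "t (Comp D k g) = G1 g (t k)" .
    qed
    obtain y where y: "y \<in> G0 (uo X)" "\<forall>k\<in>T. G1 k y = t k" using sheaf_exists[OF shG TJ tv tm] by blast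
    have Fy: "\<And>f. f \<in> {b, d} \<Longrightarrow> G1 (um f) y = xf f"
    proof -
      fix f assume f: "f \<in> {b, d}"
      have ff: "f \<in> Arr C" using fA f by blast
      have dO: "Dom D (um f) \<in> Obj D" using ff by simp
      have i: "Idm D (Dom D (um f)) \<in> Arr D" "Cod D (Idm D (Dom D (um f))) = Dom D (um f)" using dO by auto
      have e: "Comp D (um f) (Idm D (Dom D (um f))) = um f" using D.id_right[of "um f"] ff by simp
      have "um f \<in> {um b, um d}" using f by blast
      then have "um f \<in> T" unfolding T_def using D.in_sieve_gen_self[of "um f" "{um b, um d}"] ff by simp
      then have "G1 (um f) y = t (Comp D (um f) (Idm D (Dom D (um f))))" using y(2) e by simp
      also have "\<dots> = G1 (Idm D (Dom D (um f))) (xf f)" using tval[OF f i] .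
      also have "\<dots> = xf f" using Gid[OF dO] xfG[OF f] ff by simp
      finally show "G1 (um f) y = xf f" .
    qed
    have "\<forall>k\<in>sieve_gen C R. G1 (um k) y = s k"
    proof
      fix k assume k: "k \<in> sieve_gen C R"
      then obtain r0 g where rg: "r0 \<in> R" "g \<in> Arr C" "Cod C g = Dom C r0" "k = Comp C r0 g" by (rule C.sieve_gen_E)
      obtain f r where fr: "f \<in> {b, d}" "r \<in> Arr C" "Cod C r = Dom C f" "r0 = Comp C f r" using Rform[OF rg(1)] by blast
      have ff: "f \<in> Arr C" "Cod C f = X" using fA fr(1) by auto
      have gr: "Cod C g = Dom C r" using rg(3) fr ff by simp
      have kk: "k = Comp C f (Comp C r g)" using C.assoc[OF rg(2) fr(2) ff(1) gr fr(3)] rg(4) fr(4) by simp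
      have rgA: "Comp C r g \<in> Arr C" "Cod C (Comp C r g) = Dom C f" using rg(2) fr(2,3) gr by auto
      have "G1 (um k) y = G1 (um (Comp C r g)) (G1 (um f) y)" using Fcomp[OF rgA(1) ff(1) rgA(2)] y(1) ff kk by simp
      also have "\<dots> = G1 (um (Comp C r g)) (xf f)" using Fy[OF fr(1)] by simp
      also have "\<dots> = s (Comp C f (Comp C r g))" using gl[OF fr(1)] rgA kk k unfolding glues_def S_def by simp
      finally show "G1 (um k) y = s k" using kk by simp
    qed
    then show "\<exists>x\<in>G0 (uo (sq11 C Q)). \<forall>k\<in>sieve_gen C R. G1 (um k) x = s k"
      using y(1) unfolding X_def by blast
  qed
qed

lemma F_sheaf: "is_sheaf C JC (G0 \<circ> uo) (G1 \<circ> um)"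
  unfolding is_sheaf_def
proof (intro conjI allI impI)
  show "is_presheaf C (G0 \<circ> uo) (G1 \<circ> um)" unfolding is_presheaf_def
  proof (intro conjI ballI impI)
    fix f x assume "f \<in> Arr C" "x \<in> (G0 \<circ> uo) (Cod C f)"
    then show "(G1 \<circ> um) f x \<in> (G0 \<circ> uo) (Dom C f)" using Fmap by simp
  next
    fix X x assume "X \<in> Obj C" "x \<in> (G0 \<circ> uo) X"
    then show "(G1 \<circ> um) (Idm C X) x = x" using Gid by simp
  next
    fix f g x assume "f \<in> Arr C" "g \<in> Arr C" "Cod C f = Dom C g" "x \<in> (G0 \<circ> uo) (Cod C g)"
    then show "(G1 \<circ> um) (Comp C g f) x = (G1 \<circ> um) f ((G1 \<circ> um) g x)" using Fcomp by simp
  qed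
next
  fix X S s
  assume a: "S \<in> JC X \<and> (\<forall>f\<in>S. s f \<in> (G0 \<circ> uo) (Dom C f)) \<and>
       (\<forall>f\<in>S. \<forall>g\<in>Arr C. Cod C g = Dom C f \<longrightarrow> s (Comp C f g) = (G1 \<circ> um) g (s f))"
  have S: "S \<in> JC X" using a by blast
  have sv: "\<forall>f\<in>S. s f \<in> G0 (uo (Dom C f))" using a by simp
  have mt: "\<forall>f\<in>S. \<forall>g\<in>Arr C. Cod C g = Dom C f \<longrightarrow> s (Comp C f g) = G1 (um g) (s f)" using a by simp
  have Ssv: "is_sieve C X S" using C.J_sieve[OF S] .
  obtain R where R: "simple_cover C PC X R" "sieve_gen C R \<subseteq> S" using compC[OF S] by blast
  have Rc: "R \<subseteq> Arr C" "\<forall>f\<in>R. Cod C f = X" "sieve_gen C R \<in> JC X" using C.simple_cover_covers[OF R(1)] by blast+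
  have "(\<forall>k\<in>sieve_gen C R. s k \<in> G0 (uo (Dom C k))) \<and>
      (\<forall>k\<in>sieve_gen C R. \<forall>g\<in>Arr C. Cod C g = Dom C k \<longrightarrow> s (Comp C k g) = G1 (um g) (s k))"
    using sv mt R(2) by blast
  then obtain x where x: "x \<in> G0 (uo X)" "\<forall>k\<in>sieve_gen C R. G1 (um k) x = s k"
    using exist_simple[OF R(1)] by blast
  have fS: "\<And>f. f \<in> S \<Longrightarrow> f \<in> Arr C \<and> Cod C f = X" using C.sieveD[OF Ssv] by blast
  have glue: "\<forall>f\<in>S. G1 (um f) x = s f"
  proof
    fix f assume f: "f \<in> S"
    have f': "f \<in> Arr C" "Cod C f = X" using fS[OF f] by auto
    have pbJ: "pb_sieve C f (sieve_gen C R) \<in> JC (Dom C f)" using C.J_pb[OF Rc(3) f'] .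
    have x1: "G1 (um f) x \<in> G0 (uo (Dom C f))" using Fmap[OF f'(1)] x(1) f' by simp
    have x2: "s f \<in> G0 (uo (Dom C f))" using sv f by blast
    show "G1 (um f) x = s f"
    proof (rule separated[OF pbJ x1 x2])
      fix g assume "g \<in> pb_sieve C f (sieve_gen C R)"
      then have g: "g \<in> Arr C" "Cod C g = Dom C f" "Comp C f g \<in> sieve_gen C R" unfolding pb_sieve_def by auto
      have "G1 (um g) (G1 (um f) x) = G1 (um (Comp C f g)) x" using Fcomp[OF g(1) f'(1) g(2)] x(1) f' by simp
      also have "\<dots> = s (Comp C f g)" using x(2) g(3) by blast
      also have "\<dots> = G1 (um g) (s f)" using mt f g by blast
      finally show "G1 (um g) (G1 (um f) x) = G1 (um g) (s f)" .
    qed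
  qed
  show "\<exists>!x. x \<in> (G0 \<circ> uo) X \<and> (\<forall>f\<in>S. (G1 \<circ> um) f x = s f)"
  proof
    show "x \<in> (G0 \<circ> uo) X \<and> (\<forall>f\<in>S. (G1 \<circ> um) f x = s f)" using x(1) glue by simp
  next
    fix y assume y: "y \<in> (G0 \<circ> uo) X \<and> (\<forall>f\<in>S. (G1 \<circ> um) f y = s f)"
    show "y = x"
    proof (rule separated[OF S])
      show "y \<in> G0 (uo X)" using y by simp
      show "x \<in> G0 (uo X)" using x(1) .
      fix f assume "f \<in> S"
      then show "G1 (um f) y = G1 (um f) x" using y glue by simp
    qed
  qed
qed

end

theorem lemmaA2p1:
  fixes C :: "('o,'m) cat" and D :: "('p,'n) cat"
    and PC :: "'m square set" and PD :: "'n square set"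
    and uo :: "'o \<Rightarrow> 'p" and um :: "'m \<Rightarrow> 'n"
  assumes "is_cat C" and "is_cat D"
    and "cd_structure C PC" and "cd_structure D PD"
    and "is_functor C D uo um"
  shows
   "(cd_complete C PC \<and> preserves_cover_pullbacks C (cd_topology C PC) D um \<and>
     (\<exists>e :: 'n set \<Rightarrow> 'v. inj e) \<longrightarrow>
       (continuous_site TYPE('v) C (cd_topology C PC) D (cd_topology D PD) uo um \<longleftrightarrow>
        (\<forall>Q\<in>PC. covering_family D (cd_topology D PD) (uo (sq11 C Q)) {um (sq_b Q), um (sq_d Q)})))
    \<and>
    (cd_complete D PD \<and>
     (\<forall>X'\<in>Obj C. \<forall>Q\<in>PD. sq11 D Q = uo X' \<longrightarrow>
        (\<exists>Q'\<in>PC. map_sq um Q' = Q \<and> sq11 C Q' = X')) \<longrightarrow>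
       cocontinuous_site C (cd_topology C PC) D (cd_topology D PD) uo um)"
proof -
  interpret C: category C by (unfold_locales) (rule assms(1))
  interpret D: category D by (unfold_locales) (rule assms(2))
  note tC = C.cd_topology_is_topology[OF assms(3)]
  note tD = D.cd_topology_is_topology[OF assms(4)]
  interpret ts: two_sites C D uo um "cd_topology C PC" PC "cd_topology D PD" PD
  proof (unfold_locales)
    show "is_functor C D uo um" by (rule assms(5))
    show "is_topology C (cd_topology C PC)" by (rule tC(1))
    show "cd_structure C PC" by (rule assms(3))
    show "\<And>Q. Q \<in> PC \<Longrightarrow> sieve_gen C {sq_b Q, sq_d Q} \<in> cd_topology C PC (sq11 C Q)" by (rule tC(2))
    show "is_topology D (cd_topology D PD)" by (rule tD(1))
    show "cd_structure D PD" by (rule assms(4))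
    show "\<And>Q. Q \<in> PD \<Longrightarrow> sieve_gen D {sq_b Q, sq_d Q} \<in> cd_topology D PD (sq11 D Q)" by (rule tD(2))
  qed
  show ?thesis
  proof (intro conjI impI)
    assume a: "cd_complete C PC \<and> preserves_cover_pullbacks C (cd_topology C PC) D um \<and>
     (\<exists>e :: 'n set \<Rightarrow> 'v. inj e)"
    then obtain e :: "'n set \<Rightarrow> 'v" where e: "inj e" by blast
    have compC: "\<And>X S. S \<in> cd_topology C PC X \<Longrightarrow> \<exists>R. simple_cover C PC X R \<and> sieve_gen C R \<subseteq> S"
      using a unfolding cd_complete_def by blast
    have pbs: "preserves_cover_pullbacks C (cd_topology C PC) D um" using a by blast
    show "continuous_site TYPE('v) C (cd_topology C PC) D (cd_topology D PD) uo um \<longleftrightarrow>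
        (\<forall>Q\<in>PC. covering_family D (cd_topology D PD) (uo (sq11 C Q)) {um (sq_b Q), um (sq_d Q)})"
    proof
      assume cont: "continuous_site TYPE('v) C (cd_topology C PC) D (cd_topology D PD) uo um"
      show "\<forall>Q\<in>PC. covering_family D (cd_topology D PD) (uo (sq11 C Q)) {um (sq_b Q), um (sq_d Q)}"
        using ts.cont_imp_cover[OF e cont] by blast
    next
      assume covs: "\<forall>Q\<in>PC. covering_family D (cd_topology D PD) (uo (sq11 C Q)) {um (sq_b Q), um (sq_d Q)}"
      show "continuous_site TYPE('v) C (cd_topology C PC) D (cd_topology D PD) uo um"
        unfolding continuous_site_def
      proof (intro allI impI)
        fix G0 :: "'p \<Rightarrow> 'v set" and G1 :: "'n \<Rightarrow> 'v \<Rightarrow> 'v"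
        assume sh: "is_sheaf D (cd_topology D PD) G0 G1"
        interpret cc: cont_ctx C D uo um "cd_topology C PC" PC "cd_topology D PD" PD G0 G1
          by (unfold_locales) (rule sh, rule covs, rule compC, assumption, rule pbs)
        show "is_sheaf C (cd_topology C PC) (G0 \<circ> uo) (G1 \<circ> um)" by (rule cc.F_sheaf)
      qed
    qed
  next
    assume b: "cd_complete D PD \<and>
     (\<forall>X'\<in>Obj C. \<forall>Q\<in>PD. sq11 D Q = uo X' \<longrightarrow> (\<exists>Q'\<in>PC. map_sq um Q' = Q \<and> sq11 C Q' = X'))"
    show "cocontinuous_site C (cd_topology C PC) D (cd_topology D PD) uo um"
      using ts.cocont[OF conjunct1[OF b] refl conjunct2[OF b]] .
  qed
qed


end
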